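(* Let $\mathbb{K}$ be a field, $m\ge 3$, $R=\mathbb{K}[T_1,\dots,T_m]$, and $I=\langle T_1^{a_1},\dots,T_m^{a_m},T_1^{b_1}\cdots T_m^{b_m}\rangle$ with $0\le b_i<a_i$ for all $i$ and $b_i\ne0$ for at least two $i$; let $L\subset S=R[X_1,\dots,X_m,W]$ be the defining ideal of its Rees algebra. Let $\mathcal{C}\subset\{\mathbf{c}\in\mathbb{N}^m\mid |\mathbf{c}|\ge2\}$ be a finite set such that $\Gamma_0\cup\{\mathcal{P}(W^{|\mathbf{c}|},\mathbf{X}^{\mathbf{c}})\mid \mathbf{c}\in\mathcal{C}\}$ is a Gröbner basis of $L$ with respect to $\tau$, and such that $\mathcal{C}$ is closed: if $\mathbf{c}\in\mathcal{C}$, $|\mathbf{c}'|\ge 2$ and $\mathbf{c}'\prec_{\tau'}\mathbf{c}$, then $\mathbf{c}'\in\mathcal{C}$. Order $\mathcal{C}=\{\mathbf{c}_1\prec_{\tau'}\cdots\prec_{\tau'}\mathbf{c}_N\}$ and for $0\le j\le N$ set $\Theta_j=\Gamma_0\cup\{\mathcal{P}(W^{|\mathbf{c}_i|},\mathbf{X}^{\mathbf{c}_i})\mid 1\le i\le j\}$ and $\mathcal{H}_j=\langle\Theta_j\rangle$. Then for every $0\le j\le N$, $\Theta_j$ is a Gröbner basis of $\mathcal{H}_j$ with respect to $\tau$.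
   Context: Write $\mathbf{T}^{\mathbf{b}}=T_1^{b_1}\cdots T_m^{b_m}$. $L$ is the kernel of the $R$-algebra map $S\to R[Z]$, $X_i\mapsto T_i^{a_i}Z$, $W\mapsto\mathbf{T}^{\mathbf{b}}Z$. Set $X_{m+1}:=W$; for $\mathbf{c}\in\mathbb{N}^m$, $\mathbf{X}^{\mathbf{c}}=\prod X_i^{c_i}$ and $|\mathbf{c}|=\sum c_i$. Let $\Psi:S\to R$ be the $R$-algebra map $X_i\mapsto T_i^{a_i}$, $W\mapsto\mathbf{T}^{\mathbf{b}}$. For monomials $M,N$ in $X_1,\dots,X_m,W$, with $g=\gcd(\Psi(M),\Psi(N))$, set $\mathcal{P}(M,N)=\frac{\Psi(N)}{g}M-\frac{\Psi(M)}{g}N$. $\Gamma_0=\{\mathcal{P}(X_i,X_j)\mid 1\le j<i\le m+1\}$. The order $\tau$ is lex on $S$ with $W>X_m>\cdots>X_1>T_1>\cdots>T_m$. The total order $\tau'$ on $\mathbb{N}^m$: $\boldsymbol\alpha\prec_{\tau'}\boldsymbol\beta$ iff $|\boldsymbol\alpha|<|\boldsymbol\beta|$, or $|\boldsymbol\alpha|=|\boldsymbol\beta|$ and there is $i_0$ with $\alpha_{i_0}>\beta_{i_0}$ and $\alpha_i=\beta_i$ for all $i>i_0$. *)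

theory Defs
  imports "HOL-Library.Poly_Mapping"
begin

text \<open>Variables: T i (1 \<le> i \<le> m), X i (1 \<le> i \<le> m+1, where X (m+1) is W),
  and an extra variable Zv used only for the target ring R[Z].\<close>
datatype var = T nat | X nat | Zv

type_synonym mono = "var \<Rightarrow>\<^sub>0 nat"
type_synonym 'k mpoly = "mono \<Rightarrow>\<^sub>0 'k"

definition Wvar :: "nat \<Rightarrow> var" where "Wvar m = X (Suc m)"

definition vars_S :: "nat \<Rightarrow> var set" where
  "vars_S m = {T i | i. 1 \<le> i \<and> i \<le> m} \<union> {X i | i. 1 \<le> i \<and> i \<le> Suc m}"

definition vars_RZ :: "nat \<Rightarrow> var set" where
  "vars_RZ m = {T i | i. 1 \<le> i \<and> i \<le> m} \<union> {Zv}"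

definition S_ring :: "nat \<Rightarrow> ('k::field) mpoly set" where
  "S_ring m = Collect (\<lambda>p. \<forall>\<alpha>\<in>Poly_Mapping.keys p. Poly_Mapping.keys \<alpha> \<subseteq> vars_S m)"

definition RZ_ring :: "nat \<Rightarrow> ('k::field) mpoly set" where
  "RZ_ring m = Collect (\<lambda>p. \<forall>\<alpha>\<in>Poly_Mapping.keys p. Poly_Mapping.keys \<alpha> \<subseteq> vars_RZ m)"

definition monom :: "mono \<Rightarrow> ('k::field) mpoly" where
  "monom \<alpha> = Poly_Mapping.single \<alpha> 1"

definition subst :: "(var \<Rightarrow> ('k::field) mpoly) \<Rightarrow> 'k mpoly \<Rightarrow> 'k mpoly" where
  "subst \<sigma> p = (\<Sum>\<alpha>\<in>Poly_Mapping.keys p. Poly_Mapping.single 0 (Poly_Mapping.lookup p \<alpha>) *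
                   (\<Prod>v\<in>Poly_Mapping.keys \<alpha>. \<sigma> v ^ Poly_Mapping.lookup \<alpha> v))"

definition Tmono :: "nat \<Rightarrow> (nat \<Rightarrow> nat) \<Rightarrow> mono" where
  "Tmono m e = (\<Sum>i\<in>{1..m}. Poly_Mapping.single (T i) (e i))"

definition Xmono :: "nat \<Rightarrow> (nat \<Rightarrow> nat) \<Rightarrow> mono" where
  "Xmono m c = (\<Sum>i\<in>{1..m}. Poly_Mapping.single (X i) (c i))"

definition Wpow :: "nat \<Rightarrow> nat \<Rightarrow> mono" where
  "Wpow m k = Poly_Mapping.single (Wvar m) k"

definition rees_sigma :: "nat \<Rightarrow> (nat \<Rightarrow> nat) \<Rightarrow> (nat \<Rightarrow> nat) \<Rightarrow> var \<Rightarrow> ('k::field) mpoly" where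
  "rees_sigma m a b v = (case v of
      T i \<Rightarrow> monom (Poly_Mapping.single (T i) 1)
    | X i \<Rightarrow> (if i = Suc m then monom (Tmono m b + Poly_Mapping.single Zv 1)
              else monom (Poly_Mapping.single (T i) (a i) + Poly_Mapping.single Zv 1))
    | Zv \<Rightarrow> monom (Poly_Mapping.single Zv 1))"

definition rees_L :: "nat \<Rightarrow> (nat \<Rightarrow> nat) \<Rightarrow> (nat \<Rightarrow> nat) \<Rightarrow> ('k::field) mpoly set" where
  "rees_L m a b = {p \<in> S_ring m. subst (rees_sigma m a b) p = 0}"

text \<open>Exponent of T_i in \<Psi>(M), for a monomial M in X_1..X_m,W.\<close>
definition psi_exp :: "nat \<Rightarrow> (nat \<Rightarrow> nat) \<Rightarrow> (nat \<Rightarrow> nat) \<Rightarrow> mono \<Rightarrow> nat \<Rightarrow> nat" where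
  "psi_exp m a b M i = Poly_Mapping.lookup M (X i) * a i + Poly_Mapping.lookup M (Wvar m) * b i"

text \<open>\<P>(M,N) = (\<Psi>(N)/g) M - (\<Psi>(M)/g) N with g = gcd(\<Psi>(M),\<Psi>(N)) (componentwise min).\<close>
definition Pcal :: "nat \<Rightarrow> (nat \<Rightarrow> nat) \<Rightarrow> (nat \<Rightarrow> nat) \<Rightarrow> mono \<Rightarrow> mono \<Rightarrow> ('k::field) mpoly" where
  "Pcal m a b M N =
     (let pM = psi_exp m a b M; pN = psi_exp m a b N;
          g = (\<lambda>i. min (pM i) (pN i))
      in monom (Tmono m (\<lambda>i. pN i - g i) + M) - monom (Tmono m (\<lambda>i. pM i - g i) + N))"

definition Gamma0 :: "nat \<Rightarrow> (nat \<Rightarrow> nat) \<Rightarrow> (nat \<Rightarrow> nat) \<Rightarrow> ('k::field) mpoly set" where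
  "Gamma0 m a b = {Pcal m a b (Poly_Mapping.single (X i) 1) (Poly_Mapping.single (X j) 1)
                    | i j. 1 \<le> j \<and> j < i \<and> i \<le> Suc m}"

definition Pc :: "nat \<Rightarrow> (nat \<Rightarrow> nat) \<Rightarrow> (nat \<Rightarrow> nat) \<Rightarrow> (nat \<Rightarrow> nat) \<Rightarrow> ('k::field) mpoly" where
  "Pc m a b c = Pcal m a b (Wpow m (\<Sum>i\<in>{1..m}. c i)) (Xmono m c)"

definition ideal_S :: "nat \<Rightarrow> ('k::field) mpoly set \<Rightarrow> 'k mpoly set" where
  "ideal_S m G = {p. \<exists>F q. finite F \<and> F \<subseteq> G \<and> (\<forall>g\<in>F. q g \<in> S_ring m) \<and> p = (\<Sum>g\<in>F. q g * g)}"

text \<open>Ranking of variables: W > X_m > ... > X_1 > T_1 > ... > T_m.\<close>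
definition var_rank :: "nat \<Rightarrow> var \<Rightarrow> nat" where
  "var_rank m v = (case v of T i \<Rightarrow> Suc m - i | X i \<Rightarrow> m + i | Zv \<Rightarrow> 0)"

definition lex_less :: "nat \<Rightarrow> mono \<Rightarrow> mono \<Rightarrow> bool" where
  "lex_less m \<alpha> \<beta> \<longleftrightarrow> (\<exists>v\<in>vars_S m. Poly_Mapping.lookup \<alpha> v < Poly_Mapping.lookup \<beta> v \<and>
       (\<forall>w\<in>vars_S m. var_rank m v < var_rank m w \<longrightarrow> Poly_Mapping.lookup \<alpha> w = Poly_Mapping.lookup \<beta> w))"

definition lead_mono :: "nat \<Rightarrow> ('k::field) mpoly \<Rightarrow> mono" where
  "lead_mono m p = (THE \<alpha>. \<alpha> \<in> Poly_Mapping.keys p \<and> (\<forall>\<beta>\<in>Poly_Mapping.keys p. \<beta> \<noteq> \<alpha> \<longrightarrow> lex_less m \<beta> \<alpha>))"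

definition init_ideal :: "nat \<Rightarrow> ('k::field) mpoly set \<Rightarrow> 'k mpoly set" where
  "init_ideal m H = ideal_S m {monom (lead_mono m f) | f. f \<in> H \<and> f \<noteq> 0}"

definition is_groebner_basis :: "nat \<Rightarrow> ('k::field) mpoly set \<Rightarrow> 'k mpoly set \<Rightarrow> bool" where
  "is_groebner_basis m G H \<longleftrightarrow> G \<subseteq> H \<and> init_ideal m H = init_ideal m G"

definition in_Nm :: "nat \<Rightarrow> (nat \<Rightarrow> nat) \<Rightarrow> bool" where
  "in_Nm m c \<longleftrightarrow> (\<forall>i. (i < 1 \<or> m < i) \<longrightarrow> c i = 0)"

definition vabs :: "nat \<Rightarrow> (nat \<Rightarrow> nat) \<Rightarrow> nat" where
  "vabs m c = (\<Sum>i\<in>{1..m}. c i)"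

definition tau'_less :: "nat \<Rightarrow> (nat \<Rightarrow> nat) \<Rightarrow> (nat \<Rightarrow> nat) \<Rightarrow> bool" where
  "tau'_less m \<alpha> \<beta> \<longleftrightarrow> vabs m \<alpha> < vabs m \<beta> \<or>
     (vabs m \<alpha> = vabs m \<beta> \<and> (\<exists>i0\<in>{1..m}. \<alpha> i0 > \<beta> i0 \<and> (\<forall>i\<in>{i0<..m}. \<alpha> i = \<beta> i)))"

end

theory Submission
  imports Defs
begin

lemma lookup_Tmono:
  "Poly_Mapping.lookup (Tmono m e) v =
     (case v of T i \<Rightarrow> (if 1 \<le> i \<and> i \<le> m then e i else 0) | _ \<Rightarrow> 0)"
  unfolding Tmono_def lookup_sum lookup_single
  by (cases v) (auto simp: when_def)

lemma lookup_Xmono: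
  "Poly_Mapping.lookup (Xmono m c) v =
     (case v of X i \<Rightarrow> (if 1 \<le> i \<and> i \<le> m then c i else 0) | _ \<Rightarrow> 0)"
  unfolding Xmono_def lookup_sum lookup_single
  by (cases v) (auto simp: when_def)

lemma lookup_Wpow:
  "Poly_Mapping.lookup (Wpow m k) v = (if v = X (Suc m) then k else 0)"
  unfolding Wpow_def Wvar_def lookup_single by (auto simp: when_def)

lemma lookup_single_if: "Poly_Mapping.lookup (Poly_Mapping.single k v) k' = (if k = k' then v else 0)"
  by (simp add: lookup_single when_def)

definition Smono :: "nat \<Rightarrow> mono \<Rightarrow> bool" where
  "Smono m \<alpha> \<longleftrightarrow> Poly_Mapping.keys \<alpha> \<subseteq> vars_S m"

lemma finite_vars_S: "finite (vars_S m)"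
proof -
  have "vars_S m \<subseteq> T ` {1..m} \<union> X ` {1..Suc m}" unfolding vars_S_def by auto
  then show ?thesis by (rule finite_subset) auto
qed

lemma var_rank_inj:
  assumes "v \<in> vars_S m" "w \<in> vars_S m" "var_rank m v = var_rank m w"
  shows "v = w"
  using assms unfolding vars_S_def var_rank_def by auto

lemma lex_less_add:
  assumes "lex_less m \<alpha> \<beta>" shows "lex_less m (t + \<alpha>) (t + \<beta>)"
  using assms unfolding lex_less_def by (auto simp: lookup_add)

lemma lex_less_irrefl: "\<not> lex_less m \<alpha> \<alpha>"
  unfolding lex_less_def by auto

lemma lex_less_trans:
  assumes "lex_less m \<alpha> \<beta>" "lex_less m \<beta> \<gamma>" shows "lex_less m \<alpha> \<gamma>"
proof -
  obtain v where v: "v \<in> vars_S m" "Poly_Mapping.lookup \<alpha> v < Poly_Mapping.lookup \<beta> v"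
    "\<forall>w\<in>vars_S m. var_rank m v < var_rank m w \<longrightarrow> Poly_Mapping.lookup \<alpha> w = Poly_Mapping.lookup \<beta> w"
    using assms(1) unfolding lex_less_def by blast
  obtain u where u: "u \<in> vars_S m" "Poly_Mapping.lookup \<beta> u < Poly_Mapping.lookup \<gamma> u"
    "\<forall>w\<in>vars_S m. var_rank m u < var_rank m w \<longrightarrow> Poly_Mapping.lookup \<beta> w = Poly_Mapping.lookup \<gamma> w"
    using assms(2) unfolding lex_less_def by blast
  consider "var_rank m v < var_rank m u" | "var_rank m u < var_rank m v" | "v = u"
    using var_rank_inj[OF v(1) u(1)] by linarith
  then show ?thesis
  proof cases
    case 1
    have e: "Poly_Mapping.lookup \<alpha> u = Poly_Mapping.lookup \<beta> u" using v(3) u(1) 1 by blast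
    have "\<forall>w\<in>vars_S m. var_rank m u < var_rank m w \<longrightarrow> Poly_Mapping.lookup \<alpha> w = Poly_Mapping.lookup \<gamma> w"
      using u(3) v(3) 1 by fastforce
    then show ?thesis unfolding lex_less_def using u(1,2) e by (intro bexI[of _ u] conjI) auto
  next
    case 2
    have e: "Poly_Mapping.lookup \<beta> v = Poly_Mapping.lookup \<gamma> v" using u(3) v(1) 2 by blast
    have "\<forall>w\<in>vars_S m. var_rank m v < var_rank m w \<longrightarrow> Poly_Mapping.lookup \<alpha> w = Poly_Mapping.lookup \<gamma> w"
      using u(3) v(3) 2 by fastforce
    then show ?thesis unfolding lex_less_def using v(1,2) e by (intro bexI[of _ v] conjI) auto
  next
    case 3
    have "\<forall>w\<in>vars_S m. var_rank m v < var_rank m w \<longrightarrow> Poly_Mapping.lookup \<alpha> w = Poly_Mapping.lookup \<gamma> w"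
      using u(3) v(3) 3 by auto
    then show ?thesis unfolding lex_less_def using v(1,2) u(2) 3 by (intro bexI[of _ v] conjI) auto
  qed
qed

lemma lex_less_asym: "lex_less m \<alpha> \<beta> \<Longrightarrow> \<not> lex_less m \<beta> \<alpha>"
  using lex_less_trans lex_less_irrefl by blast

lemma lex_total:
  assumes "Smono m \<alpha>" "Smono m \<beta>" "\<alpha> \<noteq> \<beta>"
  shows "lex_less m \<alpha> \<beta> \<or> lex_less m \<beta> \<alpha>"
proof -
  define D where "D = {v \<in> vars_S m. Poly_Mapping.lookup \<alpha> v \<noteq> Poly_Mapping.lookup \<beta> v}"
  have "D \<noteq> {}"
  proof
    assume "D = {}"
    have "Poly_Mapping.lookup \<alpha> v = Poly_Mapping.lookup \<beta> v" for v
    proof (cases "v \<in> vars_S m")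
      case True then show ?thesis using \<open>D = {}\<close> unfolding D_def by auto
    next
      case False
      then have "v \<notin> Poly_Mapping.keys \<alpha>" "v \<notin> Poly_Mapping.keys \<beta>"
        using assms unfolding Smono_def by auto
      then show ?thesis by (simp add: in_keys_iff)
    qed
    then have "\<alpha> = \<beta>" by (rule poly_mapping_eqI)
    with assms(3) show False by simp
  qed
  have fD: "finite D" unfolding D_def using finite_vars_S by auto
  define M where "M = Max (var_rank m ` D)"
  have "M \<in> var_rank m ` D" unfolding M_def using fD \<open>D \<noteq> {}\<close> by (intro Max_in) auto
  then obtain v where v1: "v \<in> D" "var_rank m v = M" by blast
  have v2: "\<forall>w\<in>D. var_rank m w \<le> var_rank m v" using v1 fD unfolding M_def by auto
  have eq: "\<forall>w\<in>vars_S m. var_rank m v < var_rank m w \<longrightarrow> Poly_Mapping.lookup \<alpha> w = Poly_Mapping.lookup \<beta> w"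
  proof (intro ballI impI)
    fix w assume "w \<in> vars_S m" "var_rank m v < var_rank m w"
    then have "w \<notin> D" using v2 by force
    then show "Poly_Mapping.lookup \<alpha> w = Poly_Mapping.lookup \<beta> w" using \<open>w \<in> vars_S m\<close> unfolding D_def by auto
  qed
  have eq': "\<forall>w\<in>vars_S m. var_rank m v < var_rank m w \<longrightarrow> Poly_Mapping.lookup \<beta> w = Poly_Mapping.lookup \<alpha> w"
    using eq by auto
  from v1(1) have vS: "v \<in> vars_S m" and ne: "Poly_Mapping.lookup \<alpha> v \<noteq> Poly_Mapping.lookup \<beta> v" unfolding D_def by auto
  from ne consider "Poly_Mapping.lookup \<alpha> v < Poly_Mapping.lookup \<beta> v" | "Poly_Mapping.lookup \<beta> v < Poly_Mapping.lookup \<alpha> v"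
    by linarith
  then show ?thesis
  proof cases
    case 1 then show ?thesis unfolding lex_less_def using vS eq by blast
  next
    case 2 then show ?thesis unfolding lex_less_def using vS eq' by blast
  qed
qed

lemma Smono_le:
  assumes "Smono m (t + \<mu>)" shows "Smono m t"
  using assms unfolding Smono_def by (auto simp: in_keys_iff lookup_add)

lemma Smono_add:
  assumes "Smono m t" "Smono m \<mu>" shows "Smono m (t + \<mu>)"
  using assms keys_add[of t \<mu>] unfolding Smono_def by auto

lemma Smono_diff:
  assumes "Smono m t" shows "Smono m (t - \<mu>)"
  using assms unfolding Smono_def by (auto simp: in_keys_iff lookup_minus)

lemma exists_max_lex:
  assumes "finite A" "A \<noteq> {}" "\<forall>\<alpha>\<in>A. Smono m \<alpha>"
  shows "\<exists>\<alpha>\<in>A. \<forall>\<beta>\<in>A. \<beta> \<noteq> \<alpha> \<longrightarrow> lex_less m \<beta> \<alpha>"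
  using assms
proof (induction A rule: finite_ne_induct)
  case (singleton x) then show ?case by auto
next
  case (insert x F)
  then obtain \<alpha> where \<alpha>: "\<alpha> \<in> F" "\<forall>\<beta>\<in>F. \<beta> \<noteq> \<alpha> \<longrightarrow> lex_less m \<beta> \<alpha>" by auto
  have "x \<noteq> \<alpha>" using insert \<alpha> by auto
  then consider "lex_less m x \<alpha>" | "lex_less m \<alpha> x"
    using lex_total[of m x \<alpha>] insert \<alpha> by auto
  then show ?case
  proof cases
    case 1 then show ?thesis using \<alpha> by auto
  next
    case 2
    have "\<forall>\<beta>\<in>insert x F. \<beta> \<noteq> x \<longrightarrow> lex_less m \<beta> x"
    proof (intro ballI impI)
      fix \<beta> assume "\<beta> \<in> insert x F" "\<beta> \<noteq> x"
      then have "\<beta> \<in> F" by auto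
      show "lex_less m \<beta> x"
      proof (cases "\<beta> = \<alpha>")
        case True then show ?thesis using 2 by simp
      next
        case False then show ?thesis using \<alpha> 2 \<open>\<beta> \<in> F\<close> lex_less_trans by blast
      qed
    qed
    then show ?thesis by blast
  qed
qed

definition S_like :: "nat \<Rightarrow> ('k::field) mpoly \<Rightarrow> bool" where
  "S_like m p \<longleftrightarrow> (\<forall>\<alpha>\<in>Poly_Mapping.keys p. Smono m \<alpha>)"

lemma S_ring_iff: "p \<in> S_ring m \<longleftrightarrow> (\<forall>\<alpha>\<in>Poly_Mapping.keys p. Smono m \<alpha>)"
  unfolding S_ring_def Smono_def by auto

lemma lead_mono_props:
  assumes "p \<in> S_ring m" "p \<noteq> 0"
  shows "lead_mono m p \<in> Poly_Mapping.keys p \<and>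
         (\<forall>\<beta>\<in>Poly_Mapping.keys p. \<beta> \<noteq> lead_mono m p \<longrightarrow> lex_less m \<beta> (lead_mono m p))"
proof -
  have "\<exists>\<alpha>\<in>Poly_Mapping.keys p. \<forall>\<beta>\<in>Poly_Mapping.keys p. \<beta> \<noteq> \<alpha> \<longrightarrow> lex_less m \<beta> \<alpha>"
  proof (rule exists_max_lex)
    show "finite (Poly_Mapping.keys p)" by simp
    show "Poly_Mapping.keys p \<noteq> {}" using assms(2) by simp
    show "\<forall>\<alpha>\<in>Poly_Mapping.keys p. Smono m \<alpha>" using assms(1) unfolding S_ring_iff .
  qed
  then obtain \<alpha> where \<alpha>: "\<alpha> \<in> Poly_Mapping.keys p" "\<forall>\<beta>\<in>Poly_Mapping.keys p. \<beta> \<noteq> \<alpha> \<longrightarrow> lex_less m \<beta> \<alpha>"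
    by blast
  have "lead_mono m p = \<alpha>" unfolding lead_mono_def
  proof (rule the_equality)
    show "\<alpha> \<in> Poly_Mapping.keys p \<and> (\<forall>\<beta>\<in>Poly_Mapping.keys p. \<beta> \<noteq> \<alpha> \<longrightarrow> lex_less m \<beta> \<alpha>)" using \<alpha> by auto
  next
    fix \<gamma> assume "\<gamma> \<in> Poly_Mapping.keys p \<and> (\<forall>\<beta>\<in>Poly_Mapping.keys p. \<beta> \<noteq> \<gamma> \<longrightarrow> lex_less m \<beta> \<gamma>)"
    then have g: "\<gamma> \<in> Poly_Mapping.keys p" "\<forall>\<beta>\<in>Poly_Mapping.keys p. \<beta> \<noteq> \<gamma> \<longrightarrow> lex_less m \<beta> \<gamma>" by auto
    show "\<gamma> = \<alpha>"
    proof (rule ccontr)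
      assume ne: "\<gamma> \<noteq> \<alpha>"
      then have "lex_less m \<gamma> \<alpha>" using \<alpha>(2) g(1) by blast
      moreover have "\<alpha> \<noteq> \<gamma>" using ne by simp
      then have "lex_less m \<alpha> \<gamma>" using g(2) \<alpha>(1) by blast
      ultimately show False using lex_less_asym by blast
    qed
  qed
  then show ?thesis using \<alpha> by simp
qed

lemma keys_binom:
  assumes "\<mu> \<noteq> \<nu>"
  shows "Poly_Mapping.keys (monom \<mu> - monom \<nu> :: ('k::field) mpoly) = {\<mu>, \<nu>}"
proof (intro set_eqI)
  fix x
  show "x \<in> Poly_Mapping.keys (monom \<mu> - monom \<nu> :: 'k mpoly) \<longleftrightarrow> x \<in> {\<mu>, \<nu>}"
    using assms unfolding monom_def in_keys_iff lookup_minus lookup_single_if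
    by (cases "x = \<mu>"; cases "x = \<nu>") auto
qed

lemma binom_nonzero:
  assumes "\<mu> \<noteq> \<nu>" shows "(monom \<mu> - monom \<nu> :: ('k::field) mpoly) \<noteq> 0"
proof
  assume "(monom \<mu> - monom \<nu> :: ('k::field) mpoly) = 0"
  then have "Poly_Mapping.keys (monom \<mu> - monom \<nu> :: ('k::field) mpoly) = {}" by simp
  then show False using keys_binom[OF assms, where 'k='k] by simp
qed

lemma binom_S_ring:
  assumes "Smono m \<mu>" "Smono m \<nu>"
  shows "(monom \<mu> - monom \<nu> :: ('k::field) mpoly) \<in> S_ring m"
  unfolding S_ring_iff
proof
  fix \<alpha> assume a: "\<alpha> \<in> Poly_Mapping.keys (monom \<mu> - monom \<nu> :: 'k mpoly)"
  have "Poly_Mapping.keys (monom \<mu> - monom \<nu> :: 'k mpoly) \<subseteq> {\<mu>, \<nu>}"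
  proof (cases "\<mu> = \<nu>")
    case True then show ?thesis by simp
  next
    case False then show ?thesis using keys_binom[OF False, where 'k='k] by simp
  qed
  then show "Smono m \<alpha>" using assms a by auto
qed

lemma lead_binom:
  assumes "Smono m \<mu>" "Smono m \<nu>" "lex_less m \<nu> \<mu>"
  shows "lead_mono m (monom \<mu> - monom \<nu> :: ('k::field) mpoly) = \<mu>"
proof -
  have ne: "\<mu> \<noteq> \<nu>" using assms(3) lex_less_irrefl by metis
  let ?p = "monom \<mu> - monom \<nu> :: 'k mpoly"
  have 1: "lead_mono m ?p \<in> {\<mu>, \<nu>}" and 2: "\<forall>\<beta>\<in>{\<mu>,\<nu>}. \<beta> \<noteq> lead_mono m ?p \<longrightarrow> lex_less m \<beta> (lead_mono m ?p)"
    using lead_mono_props[OF binom_S_ring[OF assms(1,2)] binom_nonzero[OF ne]] keys_binom[OF ne] by auto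
  show ?thesis
  proof (rule ccontr)
    assume "lead_mono m ?p \<noteq> \<mu>"
    then have "lead_mono m ?p = \<nu>" using 1 by auto
    then have "lex_less m \<mu> \<nu>" using 2 ne by auto
    then show False using assms(3) lex_less_asym by blast
  qed
qed

definition LT :: "nat \<Rightarrow> (nat \<Rightarrow> nat) \<Rightarrow> (nat \<Rightarrow> nat) \<Rightarrow> mono \<Rightarrow> mono \<Rightarrow> mono" where
  "LT m a b M N = Tmono m (\<lambda>i. psi_exp m a b N i - min (psi_exp m a b M i) (psi_exp m a b N i)) + M"

definition TT :: "nat \<Rightarrow> (nat \<Rightarrow> nat) \<Rightarrow> (nat \<Rightarrow> nat) \<Rightarrow> mono \<Rightarrow> mono \<Rightarrow> mono" where
  "TT m a b M N = Tmono m (\<lambda>i. psi_exp m a b M i - min (psi_exp m a b M i) (psi_exp m a b N i)) + N"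

lemma Pcal_eq: "Pcal m a b M N = monom (LT m a b M N) - monom (TT m a b M N)"
  by (simp add: Pcal_def LT_def TT_def Let_def)

abbreviation Xs :: "nat \<Rightarrow> mono" where "Xs i \<equiv> Poly_Mapping.single (X i) 1"

definition muP :: "nat \<Rightarrow> (nat \<Rightarrow> nat) \<Rightarrow> (nat \<Rightarrow> nat) \<Rightarrow> (nat \<Rightarrow> nat) \<Rightarrow> mono" where
  "muP m a b c = LT m a b (Wpow m (vabs m c)) (Xmono m c)"
definition nuP :: "nat \<Rightarrow> (nat \<Rightarrow> nat) \<Rightarrow> (nat \<Rightarrow> nat) \<Rightarrow> (nat \<Rightarrow> nat) \<Rightarrow> mono" where
  "nuP m a b c = TT m a b (Wpow m (vabs m c)) (Xmono m c)"

definition Gp :: "nat \<Rightarrow> (nat \<Rightarrow> nat) \<Rightarrow> (nat \<Rightarrow> nat) \<Rightarrow> (nat \<Rightarrow> nat) set \<Rightarrow> (mono \<times> mono) set" where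
  "Gp m a b D = {(LT m a b (Xs i) (Xs j), TT m a b (Xs i) (Xs j)) | i j. 1 \<le> j \<and> j < i \<and> i \<le> Suc m}
     \<union> {(muP m a b c, nuP m a b c) | c. c \<in> D}"

lemma Gp_mono: "D \<subseteq> D' \<Longrightarrow> Gp m a b D \<subseteq> Gp m a b D'"
  unfolding Gp_def by blast

lemma gens_eq:
  "(Gamma0 m a b \<union> {Pc m a b c | c. c \<in> D} :: ('k::field) mpoly set)
     = (\<lambda>(\<mu>,\<nu>). monom \<mu> - monom \<nu>) ` Gp m a b D"
proof (rule equalityI; rule subsetI)
  fix x :: "'k mpoly"
  assume "x \<in> Gamma0 m a b \<union> {Pc m a b c | c. c \<in> D}"
  then consider (g) i j where "1 \<le> j" "j < i" "i \<le> Suc m" "x = Pcal m a b (Xs i) (Xs j)"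
    | (p) c where "c \<in> D" "x = Pc m a b c"
    unfolding Gamma0_def by blast
  then show "x \<in> (\<lambda>(\<mu>,\<nu>). monom \<mu> - monom \<nu>) ` Gp m a b D"
  proof cases
    case g
    then have "(LT m a b (Xs i) (Xs j), TT m a b (Xs i) (Xs j)) \<in> Gp m a b D"
      unfolding Gp_def by blast
    then show ?thesis using g(4) unfolding Pcal_eq by force
  next
    case p
    then have "(muP m a b c, nuP m a b c) \<in> Gp m a b D"
      unfolding Gp_def by blast
    then show ?thesis using p(2) unfolding Pc_def Pcal_eq muP_def nuP_def vabs_def by force
  qed
next
  fix x :: "'k mpoly"
  assume "x \<in> (\<lambda>(\<mu>,\<nu>). monom \<mu> - monom \<nu>) ` Gp m a b D"
  then obtain \<mu> \<nu> where mn: "(\<mu>,\<nu>) \<in> Gp m a b D" "x = monom \<mu> - monom \<nu>" by auto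
  from mn(1) consider (g) i j where "1 \<le> j" "j < i" "i \<le> Suc m" "\<mu> = LT m a b (Xs i) (Xs j)" "\<nu> = TT m a b (Xs i) (Xs j)"
    | (p) c where "c \<in> D" "\<mu> = muP m a b c" "\<nu> = nuP m a b c"
    unfolding Gp_def by blast
  then show "x \<in> Gamma0 m a b \<union> {Pc m a b c | c. c \<in> D}"
  proof cases
    case g
    then have "x = Pcal m a b (Xs i) (Xs j)" using mn(2) by (simp add: Pcal_eq)
    then have "x \<in> Gamma0 m a b" unfolding Gamma0_def using g(1-3) by blast
    then show ?thesis by blast
  next
    case p
    then have "x = Pc m a b c" using mn(2) unfolding Pc_def Pcal_eq muP_def nuP_def vabs_def by simp
    then show ?thesis using p(1) by blast
  qed
qed

lemma psi_Xs:
  "psi_exp m a b (Poly_Mapping.single (X i) n) t = (if i = t then n * a t else 0) + (if i = Suc m then n * b t else 0)"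
  unfolding psi_exp_def Wvar_def by (simp add: lookup_single_if)

lemma psi_Wpow:
  "psi_exp m a b (Wpow m k) t = (if t = Suc m then k * a t else 0) + k * b t"
  unfolding psi_exp_def Wvar_def by (simp add: lookup_Wpow)

lemma psi_Xmono:
  "psi_exp m a b (Xmono m c) t = (if 1 \<le> t \<and> t \<le> m then c t * a t else 0)"
  unfolding psi_exp_def Wvar_def by (simp add: lookup_Xmono)

lemma lookup_muP:
  "Poly_Mapping.lookup (muP m a b c) v =
    (case v of T t \<Rightarrow> if 1 \<le> t \<and> t \<le> m then c t * a t - vabs m c * b t else 0
             | X s \<Rightarrow> if s = Suc m then vabs m c else 0 | Zv \<Rightarrow> 0)"
  unfolding muP_def LT_def lookup_add lookup_Tmono lookup_Wpow psi_Wpow psi_Xmono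
  by (cases v) auto

lemma lookup_nuP:
  "Poly_Mapping.lookup (nuP m a b c) v =
    (case v of T t \<Rightarrow> if 1 \<le> t \<and> t \<le> m then vabs m c * b t - c t * a t else 0
             | X s \<Rightarrow> if 1 \<le> s \<and> s \<le> m then c s else 0 | Zv \<Rightarrow> 0)"
  unfolding nuP_def TT_def lookup_add lookup_Tmono lookup_Xmono psi_Wpow psi_Xmono
  by (cases v) auto

lemma LT_A:
  assumes "1 \<le> j" "j < i" "i \<le> m"
  shows "LT m a b (Xs i) (Xs j) = Poly_Mapping.single (T j) (a j) + Xs i"
  by (rule poly_mapping_eqI)
     (use assms in \<open>auto simp: LT_def lookup_add lookup_Tmono psi_Xs lookup_single_if split: var.split\<close>)

lemma TT_A:
  assumes "1 \<le> j" "j < i" "i \<le> m"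
  shows "TT m a b (Xs i) (Xs j) = Poly_Mapping.single (T i) (a i) + Xs j"
  by (rule poly_mapping_eqI)
     (use assms in \<open>auto simp: TT_def lookup_add lookup_Tmono psi_Xs lookup_single_if split: var.split\<close>)

lemma W_LT_Xs: "j \<le> Suc m \<Longrightarrow> Poly_Mapping.lookup (LT m a b (Xs i) (Xs j)) (X (Suc m)) = (if i = Suc m then 1 else 0)"
  by (simp add: LT_def lookup_add lookup_Tmono lookup_single_if)

lemma W_TT_Xs: "j < Suc m \<Longrightarrow> Poly_Mapping.lookup (TT m a b (Xs i) (Xs j)) (X (Suc m)) = 0"
  by (simp add: TT_def lookup_add lookup_Tmono lookup_single_if)

lemma Smono_Tmono: "Smono m (Tmono m e)"
  unfolding Smono_def vars_S_def
  by (auto simp: in_keys_iff lookup_Tmono split: var.splits if_splits)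

lemma Smono_Xs: "1 \<le> i \<Longrightarrow> i \<le> Suc m \<Longrightarrow> Smono m (Poly_Mapping.single (X i) n)"
  unfolding Smono_def vars_S_def by auto

lemma Smono_Xmono: "Smono m (Xmono m c)"
  unfolding Smono_def vars_S_def
  by (auto simp: in_keys_iff lookup_Xmono split: var.splits if_splits)

lemma Smono_Wpow: "Smono m (Wpow m k)"
  unfolding Smono_def vars_S_def
  by (auto simp: in_keys_iff lookup_Wpow split: if_splits)

definition wt :: "nat \<Rightarrow> mono \<Rightarrow> nat" where
  "wt m \<alpha> = (\<Sum>s\<in>{1..Suc m}. s * Poly_Mapping.lookup \<alpha> (X s))"

lemma wt_add: "wt m (\<alpha> + \<beta>) = wt m \<alpha> + wt m \<beta>"
  unfolding wt_def lookup_add by (simp add: algebra_simps sum.distrib)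

lemma wt_Tmono: "wt m (Tmono m e) = 0"
  unfolding wt_def lookup_Tmono by simp

lemma wt_Xs: "1 \<le> i \<Longrightarrow> i \<le> Suc m \<Longrightarrow> wt m (Poly_Mapping.single (X i) n) = i * n"
proof -
  assume "1 \<le> i" "i \<le> Suc m"
  have "(\<lambda>s. s * (if X i = X s then n else 0)) = (\<lambda>s. if s = i then i * n else 0)" by auto
  then show ?thesis unfolding wt_def lookup_single_if using \<open>1 \<le> i\<close> \<open>i \<le> Suc m\<close>
    by (simp only:) (simp add: sum.delta)
qed

lemma wt_Wpow: "wt m (Wpow m k) = Suc m * k"
  unfolding wt_def lookup_Wpow by (simp add: sum.delta)

lemma wt_Xmono: "wt m (Xmono m c) \<le> m * vabs m c"
proof -
  have "wt m (Xmono m c) = (\<Sum>s\<in>{1..Suc m}. s * (if 1 \<le> s \<and> s \<le> m then c s else 0))"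
    unfolding wt_def lookup_Xmono by simp
  also have "\<dots> = (\<Sum>s\<in>{1..m}. s * c s)"
    by simp
  also have "\<dots> \<le> (\<Sum>s\<in>{1..m}. m * c s)" by (intro sum_mono) auto
  also have "\<dots> = m * vabs m c" unfolding vabs_def by (simp add: sum_distrib_left)
  finally show ?thesis .
qed

lemma lookup_LT_X: "Poly_Mapping.lookup (LT m a b M N) (X s) = Poly_Mapping.lookup M (X s)"
  by (simp add: LT_def lookup_add lookup_Tmono)
lemma lookup_TT_X: "Poly_Mapping.lookup (TT m a b M N) (X s) = Poly_Mapping.lookup N (X s)"
  by (simp add: TT_def lookup_add lookup_Tmono)

lemma vars_S_rank_le: "w \<in> vars_S m \<Longrightarrow> var_rank m w \<le> m + Suc m"
  unfolding vars_S_def var_rank_def by auto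

lemma vars_S_X_rank: "w \<in> vars_S m \<Longrightarrow> var_rank m (X i) < var_rank m w \<Longrightarrow> \<exists>i'. w = X i' \<and> i < i'"
  unfolding vars_S_def var_rank_def by auto

definition Wd :: "nat \<Rightarrow> mono \<Rightarrow> nat" where
  "Wd m \<alpha> = Poly_Mapping.lookup \<alpha> (X (Suc m))"

lemma Gp_props:
  assumes "(\<mu>,\<nu>) \<in> Gp m a b D" "\<forall>c\<in>D. vabs m c \<ge> 1"
  shows "Smono m \<mu> \<and> Smono m \<nu> \<and> lex_less m \<nu> \<mu> \<and> wt m \<nu> < wt m \<mu> \<and> Wd m \<nu> = 0"
proof -
  from assms(1) consider (g) i j where "1 \<le> j" "j < i" "i \<le> Suc m" "\<mu> = LT m a b (Xs i) (Xs j)" "\<nu> = TT m a b (Xs i) (Xs j)"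
    | (p) c where "c \<in> D" "\<mu> = muP m a b c" "\<nu> = nuP m a b c"
    unfolding Gp_def by blast
  then show ?thesis
  proof cases
    case g
    have S: "Smono m \<mu>" "Smono m \<nu>" unfolding g LT_def TT_def
      using g(1-3) by (auto intro!: Smono_add Smono_Tmono Smono_Xs)
    have lx: "lex_less m \<nu> \<mu>" unfolding lex_less_def
    proof (intro bexI[of _ "X i"] conjI ballI impI)
      show "X i \<in> vars_S m" using g unfolding vars_S_def by auto
      show "Poly_Mapping.lookup \<nu> (X i) < Poly_Mapping.lookup \<mu> (X i)"
        using g by (simp add: lookup_LT_X lookup_TT_X lookup_single_if)
      fix w assume "w \<in> vars_S m" "var_rank m (X i) < var_rank m w"
      then obtain i' where "w = X i'" "i < i'" using vars_S_X_rank by blast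
      then show "Poly_Mapping.lookup \<nu> w = Poly_Mapping.lookup \<mu> w"
        using g by (simp add: lookup_LT_X lookup_TT_X lookup_single_if)
    qed
    have "wt m \<nu> = j" "wt m \<mu> = i" unfolding g LT_def TT_def wt_add wt_Tmono
      using g(1-3) by (simp_all add: wt_Xs)
    moreover have "Wd m \<nu> = 0" unfolding Wd_def g using g(1-3) by (simp add: lookup_TT_X lookup_single_if)
    ultimately show ?thesis using S lx g by simp
  next
    case p
    have k: "vabs m c \<ge> 1" using assms(2) p(1) by auto
    have S: "Smono m \<mu>" "Smono m \<nu>" unfolding p muP_def nuP_def LT_def TT_def
      by (auto intro!: Smono_add Smono_Tmono Smono_Xmono Smono_Wpow)
    have lx: "lex_less m \<nu> \<mu>" unfolding lex_less_def
    proof (intro bexI[of _ "X (Suc m)"] conjI ballI impI)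
      show "X (Suc m) \<in> vars_S m" unfolding vars_S_def by auto
      show "Poly_Mapping.lookup \<nu> (X (Suc m)) < Poly_Mapping.lookup \<mu> (X (Suc m))"
        using k unfolding p by (simp add: lookup_muP lookup_nuP)
      fix w assume "w \<in> vars_S m" "var_rank m (X (Suc m)) < var_rank m w"
      then show "Poly_Mapping.lookup \<nu> w = Poly_Mapping.lookup \<mu> w"
        using vars_S_rank_le[of w m] by (simp add: var_rank_def)
    qed
    have "wt m \<nu> \<le> m * vabs m c" unfolding p nuP_def TT_def wt_add wt_Tmono using wt_Xmono by simp
    moreover have "wt m \<mu> = Suc m * vabs m c" unfolding p muP_def LT_def wt_add wt_Tmono wt_Wpow by simp
    moreover have "m * vabs m c < Suc m * vabs m c" using k by simp
    moreover have "Wd m \<nu> = 0" unfolding Wd_def p by (simp add: lookup_nuP)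
    ultimately show ?thesis using S lx by simp
  qed
qed

lemma Gp_cases:
  assumes "(\<mu>,\<nu>) \<in> Gp m a b D"
  obtains (A) i j where "1 \<le> j" "j < i" "i \<le> m" "\<mu> = Poly_Mapping.single (T j) (a j) + Xs i"
      "\<nu> = Poly_Mapping.single (T i) (a i) + Xs j" "Wd m \<mu> = 0"
    | (B) "Wd m \<mu> = 1"
    | (P) c where "c \<in> D" "\<mu> = muP m a b c" "\<nu> = nuP m a b c" "Wd m \<mu> = vabs m c"
proof -
  from assms consider (g) i j where "1 \<le> j" "j < i" "i \<le> Suc m" "\<mu> = LT m a b (Xs i) (Xs j)" "\<nu> = TT m a b (Xs i) (Xs j)"
    | (p) c where "c \<in> D" "\<mu> = muP m a b c" "\<nu> = nuP m a b c"
    unfolding Gp_def by blast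
  then show ?thesis
  proof cases
    case g
    show ?thesis
    proof (cases "i = Suc m")
      case True
      then show ?thesis using that(2) g unfolding Wd_def by (simp add: lookup_LT_X)
    next
      case False
      then have "i \<le> m" using g by simp
      then show ?thesis using that(1)[of j i] g LT_A TT_A unfolding Wd_def
        by (simp add: lookup_single_if lookup_add)
    qed
  next
    case p then show ?thesis using that(3) unfolding Wd_def by (simp add: lookup_muP)
  qed
qed

lemma nf_exists:
  fixes r :: "'a \<Rightarrow> 'a \<Rightarrow> bool" and f :: "'a \<Rightarrow> nat"
  assumes dec: "\<And>x y. r x y \<Longrightarrow> f y < f x"
  shows "\<exists>y. r\<^sup>*\<^sup>* x y \<and> (\<forall>z. \<not> r y z)"
proof (induction x rule: measure_induct_rule[of f])
  case (less x)
  show ?case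
  proof (cases "\<exists>z. r x z")
    case True
    then obtain z where "r x z" by blast
    with less dec obtain y where "r\<^sup>*\<^sup>* z y" "\<forall>w. \<not> r y w" by blast
    then show ?thesis using \<open>r x z\<close> by (meson converse_rtranclp_into_rtranclp)
  next
    case False then show ?thesis by blast
  qed
qed

lemma newman_unique:
  fixes r :: "'a \<Rightarrow> 'a \<Rightarrow> bool" and f :: "'a \<Rightarrow> nat"
  assumes dec: "\<And>x y. r x y \<Longrightarrow> f y < f x"
    and lc: "\<And>x y z. r x y \<Longrightarrow> r x z \<Longrightarrow> \<exists>u. r\<^sup>*\<^sup>* y u \<and> r\<^sup>*\<^sup>* z u"
  shows "r\<^sup>*\<^sup>* x y \<Longrightarrow> r\<^sup>*\<^sup>* x z \<Longrightarrow> \<forall>w. \<not> r y w \<Longrightarrow> \<forall>w. \<not> r z w \<Longrightarrow> y = z"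
proof (induction x arbitrary: y z rule: measure_induct_rule[of f])
  case (less x)
  show ?case
  proof (cases "\<exists>w. r x w")
    case False
    then have "x = y" "x = z" using less.prems by (metis converse_rtranclpE)+
    then show ?thesis by simp
  next
    case True
    have "x \<noteq> y" using True less.prems(3) by blast
    then obtain x1 where x1: "r x x1" "r\<^sup>*\<^sup>* x1 y" using less.prems(1) by (metis converse_rtranclpE)
    have "x \<noteq> z" using True less.prems(4) by blast
    then obtain x2 where x2: "r x x2" "r\<^sup>*\<^sup>* x2 z" using less.prems(2) by (metis converse_rtranclpE)
    obtain u where u: "r\<^sup>*\<^sup>* x1 u" "r\<^sup>*\<^sup>* x2 u" using lc[OF x1(1) x2(1)] by blast
    obtain u' where u': "r\<^sup>*\<^sup>* u u'" "\<forall>w. \<not> r u' w" using nf_exists[of r f u] dec by blast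
    have "y = u'" using less.IH[of x1 y u'] dec[OF x1(1)] x1(2) u(1) u' less.prems(3)
      by (meson rtranclp_trans)
    moreover have "z = u'" using less.IH[of x2 z u'] dec[OF x2(1)] x2(2) u(2) u' less.prems(4)
      by (meson rtranclp_trans)
    ultimately show ?thesis by simp
  qed
qed

definition step :: "nat \<Rightarrow> (nat \<Rightarrow> nat) \<Rightarrow> (nat \<Rightarrow> nat) \<Rightarrow> (nat \<Rightarrow> nat) set \<Rightarrow> mono \<Rightarrow> mono \<Rightarrow> bool" where
  "step m a b D x y \<longleftrightarrow> (\<exists>\<mu> \<nu> t. (\<mu>,\<nu>) \<in> Gp m a b D \<and> Smono m t \<and> x = t + \<mu> \<and> y = t + \<nu>)"

lemma step_props:
  assumes "step m a b D x y" "\<forall>c\<in>D. vabs m c \<ge> 1"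
  shows "Smono m x \<and> Smono m y \<and> wt m y < wt m x \<and> lex_less m y x \<and> Wd m y \<le> Wd m x"
proof -
  obtain \<mu> \<nu> t where h: "(\<mu>,\<nu>) \<in> Gp m a b D" "Smono m t" "x = t + \<mu>" "y = t + \<nu>"
    using assms(1) unfolding step_def by blast
  have p: "Smono m \<mu>" "Smono m \<nu>" "lex_less m \<nu> \<mu>" "wt m \<nu> < wt m \<mu>" "Wd m \<nu> = 0"
    using Gp_props[OF h(1) assms(2)] by auto
  show ?thesis unfolding h using p h(2)
    by (auto intro: Smono_add lex_less_add simp: wt_add Wd_def lookup_add)
qed

lemma step_mono: "D \<subseteq> D' \<Longrightarrow> step m a b D x y \<Longrightarrow> step m a b D' x y"
  unfolding step_def using Gp_mono by blast

lemma step_lift: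
  assumes "step m a b D x y" "Smono m s"
  shows "step m a b D (s + x) (s + y)"
proof -
  obtain \<mu> \<nu> t where h: "(\<mu>,\<nu>) \<in> Gp m a b D" "Smono m t" "x = t + \<mu>" "y = t + \<nu>"
    using assms(1) unfolding step_def by blast
  show ?thesis unfolding step_def
    by (rule exI[of _ \<mu>], rule exI[of _ \<nu>], rule exI[of _ "s + t"])
       (use h assms(2) Smono_add in \<open>auto simp: add.assoc\<close>)
qed

lemma steps_lift:
  assumes "(step m a b D)\<^sup>*\<^sup>* x y" "Smono m s"
  shows "(step m a b D)\<^sup>*\<^sup>* (s + x) (s + y)"
  using assms(1)
proof (induction rule: rtranclp_induct)
  case base then show ?case by simp
next
  case (step y z)
  then show ?case using step_lift[OF step(2) assms(2)] by (meson rtranclp.rtrancl_into_rtrancl)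
qed

lemma steps_lex:
  assumes "(step m a b D)\<^sup>+\<^sup>+ x y" "\<forall>c\<in>D. vabs m c \<ge> 1"
  shows "lex_less m y x"
  using assms(1)
proof (induction rule: tranclp_induct)
  case (base y) then show ?case using step_props[OF _ assms(2)] by blast
next
  case (step y z)
  then have "lex_less m z y" using step_props[OF _ assms(2)] by blast
  then show ?case using step.IH lex_less_trans by blast
qed

lemma max_comm_pm: "(\<mu>1::mono) + (\<mu>2 - \<mu>1) = \<mu>2 + (\<mu>1 - \<mu>2)"
  by (rule poly_mapping_eqI) (simp add: lookup_add lookup_minus)

lemma sum_two_out:
  assumes "finite A" "i \<in> A" "l \<in> A" "i \<noteq> l"
  shows "sum f A = f i + f l + sum f (A - {i, l})"
proof -
  have "sum f A = f i + sum f (A - {i})" using assms by (simp add: sum.remove)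
  also have "sum f (A - {i}) = f l + sum f (A - {i} - {l})" using assms by (simp add: sum.remove)
  also have "A - {i} - {l} = A - {i, l}" by auto
  finally show ?thesis by (simp add: add.assoc)
qed

locale cpsetup =
  fixes m :: nat and a b :: "nat \<Rightarrow> nat" and C D :: "(nat \<Rightarrow> nat) set"
    and ph :: "mono \<Rightarrow> 'p::comm_monoid_mult"
  assumes ab: "\<forall>i\<in>{1..m}. b i < a i"
    and Csub: "\<forall>c\<in>C. in_Nm m c \<and> vabs m c \<ge> 2"
    and Cclosed: "\<forall>c\<in>C. \<forall>c'. in_Nm m c' \<and> vabs m c' \<ge> 2 \<and> tau'_less m c' c \<longrightarrow> c' \<in> C"
    and DC: "D \<subseteq> C"
    and Dclosed: "\<forall>c\<in>D. \<forall>c'\<in>C. tau'_less m c' c \<longrightarrow> c' \<in> D"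
    and ph_add: "\<And>x y. ph (x + y) = ph x * ph y"
    and ph_pair: "\<And>\<mu> \<nu>. (\<mu>,\<nu>) \<in> Gp m a b C \<Longrightarrow> ph \<mu> = ph \<nu>"
    and G2: "\<And>y z. Smono m y \<Longrightarrow> Smono m z \<Longrightarrow> ph y = ph z \<Longrightarrow> \<forall>w. \<not> step m a b C y w
               \<Longrightarrow> \<forall>w. \<not> step m a b C z w \<Longrightarrow> y = z"
begin

lemma Cpos: "\<forall>c\<in>C. vabs m c \<ge> 1" using Csub by fastforce
lemma Dpos: "\<forall>c\<in>D. vabs m c \<ge> 1" using Cpos DC by blast

abbreviation stC where "stC \<equiv> step m a b C"
abbreviation stD where "stD \<equiv> step m a b D"

lemma ph_step: "stC x y \<Longrightarrow> ph x = ph y"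
  unfolding step_def using ph_add ph_pair by force

definition Q :: "nat \<Rightarrow> bool" where "Q w \<longleftrightarrow> (\<forall>c\<in>C. vabs m c \<le> w \<longrightarrow> c \<in> D)"

lemma Q1: "Q 1" unfolding Q_def using Csub by fastforce

lemma Q_D: "c \<in> D \<Longrightarrow> Q (vabs m c - 1)"
  unfolding Q_def
proof (intro ballI impI)
  fix c'' assume "c \<in> D" "c'' \<in> C" "vabs m c'' \<le> vabs m c - 1"
  moreover have "vabs m c \<ge> 2" using Csub DC \<open>c \<in> D\<close> by blast
  ultimately have "vabs m c'' < vabs m c" by linarith
  then have "tau'_less m c'' c" unfolding tau'_less_def by simp
  then show "c'' \<in> D" using Dclosed \<open>c \<in> D\<close> \<open>c'' \<in> C\<close> by blast
qed

lemma stC_to_D: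
  assumes "stC y z" "Wd m y \<le> w" "Q w"
  shows "stD y z"
proof -
  obtain \<mu> \<nu> t where h: "(\<mu>,\<nu>) \<in> Gp m a b C" "Smono m t" "y = t + \<mu>" "z = t + \<nu>"
    using assms(1) unfolding step_def by blast
  have "(\<mu>,\<nu>) \<in> Gp m a b D"
  proof -
    from h(1) consider "(\<mu>,\<nu>) \<in> {(LT m a b (Xs i) (Xs j), TT m a b (Xs i) (Xs j)) | i j. 1 \<le> j \<and> j < i \<and> i \<le> Suc m}"
      | c where "c \<in> C" "\<mu> = muP m a b c" "\<nu> = nuP m a b c"
      unfolding Gp_def by blast
    then show ?thesis
    proof cases
      case 1 then show ?thesis unfolding Gp_def by blast
    next
      case 2
      have "Wd m \<mu> = vabs m c" unfolding 2 Wd_def by (simp add: lookup_muP)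
      moreover have "Wd m \<mu> \<le> Wd m y" unfolding h Wd_def by (simp add: lookup_add)
      ultimately have "c \<in> D" using assms(2,3) 2(1) unfolding Q_def by auto
      then show ?thesis unfolding Gp_def 2 by blast
    qed
  qed
  then show ?thesis unfolding step_def using h by blast
qed

lemma reduceN:
  assumes "Smono m y" "Wd m y \<le> w" "Q w"
  shows "\<exists>y'. stD\<^sup>*\<^sup>* y y' \<and> (\<forall>z. \<not> stC y' z) \<and> ph y' = ph y \<and> Smono m y'"
  using assms(1,2)
proof (induction y rule: measure_induct_rule[of "wt m"])
  case (less y)
  show ?case
  proof (cases "\<exists>z. stC y z")
    case False then show ?thesis using less.prems by blast
  next
    case True
    then obtain z where z: "stC y z" by blast
    have p: "Smono m z" "wt m z < wt m y" "Wd m z \<le> Wd m y" using step_props[OF z Cpos] by auto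
    have d: "stD y z" using stC_to_D[OF z less.prems(2) assms(3)] .
    obtain y' where y': "stD\<^sup>*\<^sup>* z y'" "\<forall>z'. \<not> stC y' z'" "ph y' = ph z" "Smono m y'"
      using less.IH[OF p(2) p(1)] p(3) less.prems(2) by fastforce
    show ?thesis using y' d ph_step[OF z] by (metis converse_rtranclp_into_rtranclp)
  qed
qed

lemma join_U:
  assumes "Smono m y" "Smono m z" "ph y = ph z" "Wd m y \<le> w" "Wd m z \<le> w" "Q w"
  shows "\<exists>u. stD\<^sup>*\<^sup>* y u \<and> stD\<^sup>*\<^sup>* z u"
proof -
  obtain y' where y': "stD\<^sup>*\<^sup>* y y'" "\<forall>z. \<not> stC y' z" "ph y' = ph y" "Smono m y'"
    using reduceN[OF assms(1,4,6)] by blast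
  obtain z' where z': "stD\<^sup>*\<^sup>* z z'" "\<forall>w. \<not> stC z' w" "ph z' = ph z" "Smono m z'"
    using reduceN[OF assms(2,5,6)] by blast
  have "y' = z'" using G2[OF y'(4) z'(4)] y' z' assms(3) by simp
  then show ?thesis using y' z' by blast
qed

end

context cpsetup
begin

lemma AP_direct:
  assumes il: "1 \<le> l" "l < i" "i \<le> m" and cD: "c \<in> D"
    and muA: "\<mu>A = Poly_Mapping.single (T l) (a l) + Xs i"
    and nuA: "\<nu>A = Poly_Mapping.single (T i) (a i) + Xs l"
    and nc: "\<not> (\<forall>v. Poly_Mapping.lookup \<mu>A v = 0 \<or> Poly_Mapping.lookup (muP m a b c) v = 0)"
  shows "stD (\<mu>A + (muP m a b c - \<mu>A) - \<mu>A + \<nu>A) (\<mu>A + (muP m a b c - \<mu>A) - muP m a b c + nuP m a b c)"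
proof -
  define k where "k = vabs m c"
  have cC: "c \<in> C" using cD DC by blast
  have cN: "in_Nm m c" and k2: "k \<ge> 2" using Csub cC unfolding k_def by auto
  obtain v where v: "Poly_Mapping.lookup \<mu>A v \<noteq> 0" "Poly_Mapping.lookup (muP m a b c) v \<noteq> 0" using nc by blast
  have "v = T l \<or> v = X i" using v(1) unfolding muA by (auto simp: lookup_add lookup_single_if split: if_splits)
  moreover have "Poly_Mapping.lookup (muP m a b c) (X i) = 0" using il by (simp add: lookup_muP)
  ultimately have "v = T l" using v(2) by auto
  then have ul: "c l * a l - k * b l > 0" using v(2) il unfolding k_def by (simp add: lookup_muP)
  then have cl: "c l \<ge> 1" by (cases "c l") auto
  define c' where "c' = c(i := c i + 1, l := c l - 1)"
  have c'i: "c' i = c i + 1" and c'l: "c' l = c l - 1" and c't: "\<And>t. t \<noteq> i \<Longrightarrow> t \<noteq> l \<Longrightarrow> c' t = c t"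
    unfolding c'_def using il by auto
  have vk: "vabs m c' = k"
  proof -
    have fin: "finite {1..m}" and mem: "i \<in> {1..m}" "l \<in> {1..m}" and ne: "i \<noteq> l" using il by auto
    have "vabs m c' = c' i + c' l + sum c' ({1..m} - {i, l})" unfolding vabs_def by (rule sum_two_out[OF fin mem ne])
    moreover have "vabs m c = c i + c l + sum c ({1..m} - {i, l})" unfolding vabs_def by (rule sum_two_out[OF fin mem ne])
    moreover have "sum c' ({1..m} - {i, l}) = sum c ({1..m} - {i, l})" by (rule sum.cong) (auto simp: c't)
    ultimately show ?thesis unfolding k_def using c'i c'l cl by simp
  qed
  have c'N: "in_Nm m c'" using cN il unfolding in_Nm_def c'_def by auto
  have tl: "tau'_less m c' c" unfolding tau'_less_def
  proof (intro disjI2 conjI)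
    show "vabs m c' = vabs m c" using vk k_def by simp
    show "\<exists>i0\<in>{1..m}. c i0 < c' i0 \<and> (\<forall>t\<in>{i0<..m}. c' t = c t)"
      using il c'i c't by (intro bexI[of _ i]) auto
  qed
  have c'C: "c' \<in> C" using Cclosed cC c'N vk k2 tl by auto
  have c'D: "c' \<in> D" using Dclosed cD c'C tl by blast
  define lam where "lam = \<mu>A + (muP m a b c - \<mu>A)"
  define xA where "xA = lam - \<mu>A + \<nu>A"
  define xP where "xP = lam - muP m a b c + nuP m a b c"
  have ci_mult: "c' i * a i = c i * a i + a i" using c'i by simp
  have cl_mult: "c' l * a l = c l * a l - a l" using c'l cl by (simp add: diff_mult_distrib)
  have al_le: "a l \<le> c l * a l" using cl by simp
  have pw: "Poly_Mapping.lookup (muP m a b c') w \<le> Poly_Mapping.lookup xA w \<and>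
        Poly_Mapping.lookup xA w - Poly_Mapping.lookup (muP m a b c') w + Poly_Mapping.lookup (nuP m a b c') w
          = Poly_Mapping.lookup xP w" for w
  proof (cases w)
    case (T t)
    consider "t = l" | "t = i" | "t \<noteq> l" "t \<noteq> i" by blast
    then show ?thesis
    proof cases
      case 1
      then show ?thesis unfolding xA_def xP_def lam_def muA nuA T using il ul
        by (simp add: lookup_add lookup_minus lookup_single_if lookup_muP lookup_nuP vk cl_mult k_def[symmetric])
           (use al_le in arith)
    next
      case 2
      then show ?thesis unfolding xA_def xP_def lam_def muA nuA T using il ul
        by (simp add: lookup_add lookup_minus lookup_single_if lookup_muP lookup_nuP vk ci_mult k_def[symmetric])
           arith
    next
      case 3
      then show ?thesis unfolding xA_def xP_def lam_def muA nuA T using il ul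
        by (simp add: lookup_add lookup_minus lookup_single_if lookup_muP lookup_nuP vk c't k_def[symmetric])
    qed
  next
    case (X s)
    consider "s = l" | "s = i" | "s \<noteq> l" "s \<noteq> i" by blast
    then show ?thesis
    proof cases
      case 1
      then show ?thesis unfolding xA_def xP_def lam_def muA nuA X using il cl
        by (simp add: lookup_add lookup_minus lookup_single_if lookup_muP lookup_nuP vk c'l k_def[symmetric])
    next
      case 2
      then show ?thesis unfolding xA_def xP_def lam_def muA nuA X using il
        by (simp add: lookup_add lookup_minus lookup_single_if lookup_muP lookup_nuP vk c'i k_def[symmetric])
    next
      case 3
      then show ?thesis unfolding xA_def xP_def lam_def muA nuA X using il
        by (simp add: lookup_add lookup_minus lookup_single_if lookup_muP lookup_nuP vk c't k_def[symmetric])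
    qed
  next
    case Zv
    then show ?thesis unfolding xA_def xP_def lam_def muA nuA
      by (simp add: lookup_add lookup_minus lookup_single_if lookup_muP lookup_nuP)
  qed
  define t' where "t' = xA - muP m a b c'"
  have e1: "xA = t' + muP m a b c'"
    by (rule poly_mapping_eqI) (use pw in \<open>simp add: t'_def lookup_add lookup_minus\<close>)
  have e2: "xP = t' + nuP m a b c'"
    by (rule poly_mapping_eqI) (use pw in \<open>simp add: t'_def lookup_add lookup_minus\<close>)
  have SA: "Smono m \<mu>A" unfolding muA using il by (intro Smono_add) (auto simp: Smono_def vars_S_def)
  have SnA: "Smono m \<nu>A" unfolding nuA using il by (intro Smono_add) (auto simp: Smono_def vars_S_def)
  have "(muP m a b c, nuP m a b c) \<in> Gp m a b D" unfolding Gp_def using cD by blast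
  then have SP: "Smono m (muP m a b c)" using Gp_props Dpos by blast
  have "Smono m xA" unfolding xA_def lam_def
    by (intro Smono_add Smono_diff SA SnA SP)
  then have St: "Smono m t'" unfolding t'_def by (rule Smono_diff)
  have "(muP m a b c', nuP m a b c') \<in> Gp m a b D" unfolding Gp_def using c'D by blast
  then have "stD xA xP" unfolding step_def using e1 e2 St by blast
  then show ?thesis unfolding xA_def xP_def lam_def .
qed

end

context cpsetup
begin

lemma ph_res:
  assumes "(\<mu>1,\<nu>1) \<in> Gp m a b D"
  shows "ph (\<mu>1 + (\<mu>2 - \<mu>1) - \<mu>1 + \<nu>1) = ph (\<mu>1 + (\<mu>2 - \<mu>1))"
proof -
  have "(\<mu>1,\<nu>1) \<in> Gp m a b C" using assms Gp_mono[OF DC] by blast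
  then have "ph \<mu>1 = ph \<nu>1" by (rule ph_pair)
  then have "ph \<nu>1 = ph \<mu>1" by simp
  moreover have "\<mu>1 + (\<mu>2 - \<mu>1) - \<mu>1 + \<mu>1 = \<mu>1 + (\<mu>2 - \<mu>1)"
    by (rule poly_mapping_eqI) (simp add: lookup_add lookup_minus)
  ultimately show ?thesis by (metis ph_add)
qed

lemma Wd_res:
  assumes "Wd m \<nu>1 = 0"
  shows "Wd m (\<mu>1 + (\<mu>2 - \<mu>1) - \<mu>1 + \<nu>1) = Wd m \<mu>2 - Wd m \<mu>1"
  using assms unfolding Wd_def by (simp add: lookup_add lookup_minus)

lemma Smono_res:
  assumes "Smono m \<mu>1" "Smono m \<mu>2" "Smono m \<nu>1"
  shows "Smono m (\<mu>1 + (\<mu>2 - \<mu>1) - \<mu>1 + \<nu>1)"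
  using assms by (intro Smono_add Smono_diff) auto

lemma CP:
  assumes p1: "(\<mu>1,\<nu>1) \<in> Gp m a b D" and p2: "(\<mu>2,\<nu>2) \<in> Gp m a b D"
  shows "\<exists>u. stD\<^sup>*\<^sup>* (\<mu>1 + (\<mu>2 - \<mu>1) - \<mu>1 + \<nu>1) u \<and> stD\<^sup>*\<^sup>* (\<mu>1 + (\<mu>2 - \<mu>1) - \<mu>2 + \<nu>2) u"
proof -
  have P1: "Smono m \<mu>1" "Smono m \<nu>1" "Wd m \<nu>1 = 0" using Gp_props[OF p1 Dpos] by auto
  have P2: "Smono m \<mu>2" "Smono m \<nu>2" "Wd m \<nu>2 = 0" using Gp_props[OF p2 Dpos] by auto
  define x1 where "x1 = \<mu>1 + (\<mu>2 - \<mu>1) - \<mu>1 + \<nu>1"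
  define x2 where "x2 = \<mu>1 + (\<mu>2 - \<mu>1) - \<mu>2 + \<nu>2"
  have x2': "x2 = \<mu>2 + (\<mu>1 - \<mu>2) - \<mu>2 + \<nu>2" unfolding x2_def using max_comm_pm by metis
  have x1': "x1 = \<mu>2 + (\<mu>1 - \<mu>2) - \<mu>1 + \<nu>1" unfolding x1_def using max_comm_pm by metis
  have S1: "Smono m x1" unfolding x1_def by (rule Smono_res[OF P1(1) P2(1) P1(2)])
  have S2: "Smono m x2" unfolding x2' by (rule Smono_res[OF P2(1) P1(1) P2(2)])
  have ph1: "ph x1 = ph (\<mu>1 + (\<mu>2 - \<mu>1))" unfolding x1_def by (rule ph_res[OF p1])
  have ph2: "ph x2 = ph (\<mu>2 + (\<mu>1 - \<mu>2))" unfolding x2' by (rule ph_res[OF p2])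
  have ph12: "ph x1 = ph x2" unfolding ph1 ph2 using max_comm_pm[of \<mu>1 \<mu>2] by simp
  have W1: "Wd m x1 = Wd m \<mu>2 - Wd m \<mu>1" unfolding x1_def by (rule Wd_res[OF P1(3)])
  have W2: "Wd m x2 = Wd m \<mu>1 - Wd m \<mu>2" unfolding x2' by (rule Wd_res[OF P2(3)])
  have J: "\<exists>u. stD\<^sup>*\<^sup>* x1 u \<and> stD\<^sup>*\<^sup>* x2 u" if "Wd m x1 \<le> w" "Wd m x2 \<le> w" "Q w" for w
    using join_U[OF S1 S2 ph12 that] .
  have J1: "\<exists>u. stD\<^sup>*\<^sup>* x1 u \<and> stD\<^sup>*\<^sup>* x2 u" if "Wd m \<mu>1 \<le> 1" "Wd m \<mu>2 \<le> 1"
    using J[of 1] Q1 that W1 W2 by simp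
  have JP: "\<exists>u. stD\<^sup>*\<^sup>* x1 u \<and> stD\<^sup>*\<^sup>* x2 u"
    if "c \<in> D" "Wd m \<mu>1 \<ge> 1" "Wd m \<mu>2 \<ge> 1" "Wd m \<mu>1 \<le> vabs m c" "Wd m \<mu>2 \<le> vabs m c" for c
  proof -
    have "Wd m x1 \<le> vabs m c - 1" "Wd m x2 \<le> vabs m c - 1" unfolding W1 W2 using that by linarith+
    then show ?thesis using J Q_D[OF that(1)] by blast
  qed
  have "\<exists>u. stD\<^sup>*\<^sup>* x1 u \<and> stD\<^sup>*\<^sup>* x2 u"
  proof (cases "\<forall>v. Poly_Mapping.lookup \<mu>1 v = 0 \<or> Poly_Mapping.lookup \<mu>2 v = 0")
    case cop: True
    have e1: "x1 = \<nu>1 + \<mu>2"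
    proof (rule poly_mapping_eqI)
      fix v
      from spec[OF cop, of v] show "Poly_Mapping.lookup x1 v = Poly_Mapping.lookup (\<nu>1 + \<mu>2) v"
      proof
        assume h: "Poly_Mapping.lookup \<mu>1 v = 0"
        show ?thesis unfolding x1_def lookup_add lookup_minus h by simp
      next
        assume h: "Poly_Mapping.lookup \<mu>2 v = 0"
        show ?thesis unfolding x1_def lookup_add lookup_minus h by simp
      qed
    qed
    have e2: "x2 = \<nu>2 + \<mu>1"
    proof (rule poly_mapping_eqI)
      fix v
      from spec[OF cop, of v] show "Poly_Mapping.lookup x2 v = Poly_Mapping.lookup (\<nu>2 + \<mu>1) v"
      proof
        assume h: "Poly_Mapping.lookup \<mu>1 v = 0"
        show ?thesis unfolding x2_def lookup_add lookup_minus h by simp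
      next
        assume h: "Poly_Mapping.lookup \<mu>2 v = 0"
        show ?thesis unfolding x2_def lookup_add lookup_minus h by simp
      qed
    qed
    have "stD x1 (\<nu>1 + \<nu>2)" unfolding step_def e1
      by (rule exI[of _ \<mu>2], rule exI[of _ \<nu>2], rule exI[of _ \<nu>1]) (simp add: p2 P1)
    moreover have "stD x2 (\<nu>1 + \<nu>2)" unfolding step_def e2
      by (rule exI[of _ \<mu>1], rule exI[of _ \<nu>1], rule exI[of _ \<nu>2]) (simp add: p1 P2 add.commute)
    ultimately show ?thesis by blast
  next
    case nc: False
    from p1 show ?thesis
    proof (cases rule: Gp_cases)
      case (A i l)
      from p2 show ?thesis
      proof (cases rule: Gp_cases)
        case A2: (A i2 l2)
        show ?thesis using J1 A(6) A2(6) by simp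
      next
        case B
        show ?thesis using J1 A(6) B by simp
      next
        case (P c)
        have "stD x1 x2" unfolding x1_def x2_def P(2,3)
          using AP_direct[OF A(1-3) P(1) A(4,5)] nc unfolding P(2) by blast
        then show ?thesis by blast
      qed
    next
      case B
      from p2 show ?thesis
      proof (cases rule: Gp_cases)
        case A2: (A i2 l2)
        show ?thesis using J1 A2(6) B by simp
      next
        case B2: B
        show ?thesis using J1 B2 B by simp
      next
        case (P c)
        show ?thesis using JP[OF P(1)] P(4) B Dpos P(1) by auto
      qed
    next
      case (P c)
      from p2 show ?thesis
      proof (cases rule: Gp_cases)
        case A2: (A i2 l2)
        have nc': "\<not> (\<forall>v. Poly_Mapping.lookup \<mu>2 v = 0 \<or> Poly_Mapping.lookup (muP m a b c) v = 0)"
          using nc unfolding P(2) by auto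
        have "stD x2 x1" unfolding x2' x1' P(2,3)
          by (rule AP_direct[OF A2(1-3) P(1) A2(4,5) nc'])
        then show ?thesis by blast
      next
        case B
        show ?thesis using JP[OF P(1)] P(4) B Dpos P(1) by auto
      next
        case P2: (P c2)
        have k1: "vabs m c \<ge> 1" "vabs m c2 \<ge> 1" using Dpos P(1) P2(1) by auto
        show ?thesis
        proof (cases "vabs m c \<le> vabs m c2")
          case True
          show ?thesis using JP[OF P2(1)] P(4) P2(4) True k1 by auto
        next
          case False
          show ?thesis using JP[OF P(1)] P(4) P2(4) False k1 by auto
        qed
      qed
    qed
  qed
  then show ?thesis unfolding x1_def x2_def .
qed

lemma local_conf:
  assumes "stD x y1" "stD x y2"
  shows "\<exists>u. stD\<^sup>*\<^sup>* y1 u \<and> stD\<^sup>*\<^sup>* y2 u"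
proof -
  obtain \<mu>1 \<nu>1 t1 where h1: "(\<mu>1,\<nu>1) \<in> Gp m a b D" "Smono m t1" "x = t1 + \<mu>1" "y1 = t1 + \<nu>1"
    using assms(1) unfolding step_def by blast
  obtain \<mu>2 \<nu>2 t2 where h2: "(\<mu>2,\<nu>2) \<in> Gp m a b D" "Smono m t2" "x = t2 + \<mu>2" "y2 = t2 + \<nu>2"
    using assms(2) unfolding step_def by blast
  define lam where "lam = \<mu>1 + (\<mu>2 - \<mu>1)"
  define s where "s = x - lam"
  have Sx: "Smono m x" using step_props[OF assms(1) Dpos] by blast
  have Ss: "Smono m s" unfolding s_def using Smono_diff[OF Sx] .
  have lx: "\<And>v. Poly_Mapping.lookup x v = Poly_Mapping.lookup t1 v + Poly_Mapping.lookup \<mu>1 v"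
           "\<And>v. Poly_Mapping.lookup x v = Poly_Mapping.lookup t2 v + Poly_Mapping.lookup \<mu>2 v"
  proof -
    fix v
    show "Poly_Mapping.lookup x v = Poly_Mapping.lookup t1 v + Poly_Mapping.lookup \<mu>1 v"
      unfolding h1(3) by (simp add: lookup_add)
  next
    fix v
    have "Poly_Mapping.lookup x v = Poly_Mapping.lookup (t2 + \<mu>2) v" using h2(3) by simp
    then show "Poly_Mapping.lookup x v = Poly_Mapping.lookup t2 v + Poly_Mapping.lookup \<mu>2 v"
      by (simp add: lookup_add)
  qed
  have e1: "y1 = s + (lam - \<mu>1 + \<nu>1)"
  proof (rule poly_mapping_eqI)
    fix v
    show "Poly_Mapping.lookup y1 v = Poly_Mapping.lookup (s + (lam - \<mu>1 + \<nu>1)) v"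
      using lx(1)[of v] lx(2)[of v] unfolding h1(4) s_def lam_def
      by (simp only: lookup_add lookup_minus; arith)
  qed
  have e2: "y2 = s + (lam - \<mu>2 + \<nu>2)"
  proof (rule poly_mapping_eqI)
    fix v
    show "Poly_Mapping.lookup y2 v = Poly_Mapping.lookup (s + (lam - \<mu>2 + \<nu>2)) v"
      using lx(1)[of v] lx(2)[of v] unfolding h2(4) s_def lam_def
      by (simp only: lookup_add lookup_minus; arith)
  qed
  have "\<exists>u. stD\<^sup>*\<^sup>* (lam - \<mu>1 + \<nu>1) u \<and> stD\<^sup>*\<^sup>* (lam - \<mu>2 + \<nu>2) u"
    unfolding lam_def by (rule CP[OF h1(1) h2(1)])
  then obtain u where u: "stD\<^sup>*\<^sup>* (lam - \<mu>1 + \<nu>1) u" "stD\<^sup>*\<^sup>* (lam - \<mu>2 + \<nu>2) u"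
    by blast
  have "stD\<^sup>*\<^sup>* y1 (s + u)" unfolding e1 by (rule steps_lift[OF u(1) Ss])
  moreover have "stD\<^sup>*\<^sup>* y2 (s + u)" unfolding e2 by (rule steps_lift[OF u(2) Ss])
  ultimately show ?thesis by blast
qed

lemma stD_dec:
  assumes "stD x y" shows "wt m y < wt m x"
  using step_props[OF assms Dpos] by blast

lemma unique_nf:
  assumes "stD\<^sup>*\<^sup>* x y" "stD\<^sup>*\<^sup>* x z" "\<forall>w. \<not> stD y w" "\<forall>w. \<not> stD z w"
  shows "y = z"
  by (rule newman_unique[of stD "wt m", OF stD_dec local_conf assms])

end

definition phi :: "(var \<Rightarrow> ('k::field) mpoly) \<Rightarrow> mono \<Rightarrow> 'k mpoly" where
  "phi \<sigma> \<alpha> = (\<Prod>v\<in>Poly_Mapping.keys \<alpha>. \<sigma> v ^ Poly_Mapping.lookup \<alpha> v)"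

lemma phi_superset:
  assumes "finite A" "Poly_Mapping.keys \<alpha> \<subseteq> A"
  shows "phi \<sigma> \<alpha> = (\<Prod>v\<in>A. \<sigma> v ^ Poly_Mapping.lookup \<alpha> v)"
  unfolding phi_def
  by (rule prod.mono_neutral_left[OF assms(1,2)]) (auto simp: in_keys_iff)

lemma phi_add: "phi \<sigma> (\<alpha> + \<beta>) = phi \<sigma> \<alpha> * phi \<sigma> \<beta>"
proof -
  define A where "A = Poly_Mapping.keys \<alpha> \<union> Poly_Mapping.keys \<beta>"
  have fA: "finite A" unfolding A_def by simp
  have "phi \<sigma> (\<alpha> + \<beta>) = (\<Prod>v\<in>A. \<sigma> v ^ Poly_Mapping.lookup (\<alpha> + \<beta>) v)"
    by (rule phi_superset[OF fA]) (use keys_add[of \<alpha> \<beta>] in \<open>auto simp: A_def\<close>)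
  also have "\<dots> = (\<Prod>v\<in>A. \<sigma> v ^ Poly_Mapping.lookup \<alpha> v * \<sigma> v ^ Poly_Mapping.lookup \<beta> v)"
    by (simp add: lookup_add power_add)
  also have "\<dots> = (\<Prod>v\<in>A. \<sigma> v ^ Poly_Mapping.lookup \<alpha> v) * (\<Prod>v\<in>A. \<sigma> v ^ Poly_Mapping.lookup \<beta> v)"
    by (rule prod.distrib)
  also have "\<dots> = phi \<sigma> \<alpha> * phi \<sigma> \<beta>"
    using phi_superset[OF fA, of \<alpha> \<sigma>] phi_superset[OF fA, of \<beta> \<sigma>] unfolding A_def by auto
  finally show ?thesis .
qed

lemma subst_binom:
  assumes "\<mu> \<noteq> \<nu>"
  shows "subst \<sigma> (monom \<mu> - monom \<nu>) = phi \<sigma> \<mu> - phi \<sigma> (\<nu>::mono)"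
proof -
  let ?p = "monom \<mu> - monom \<nu> :: 'a::field mpoly"
  have k: "Poly_Mapping.keys ?p = {\<mu>, \<nu>}" by (rule keys_binom[OF assms])
  have l1: "Poly_Mapping.lookup ?p \<mu> = 1" and l2: "Poly_Mapping.lookup ?p \<nu> = -1"
    using assms unfolding monom_def by (simp_all add: lookup_minus lookup_single_if)
  have "subst \<sigma> ?p = Poly_Mapping.single 0 (Poly_Mapping.lookup ?p \<mu>) * phi \<sigma> \<mu>
                      + Poly_Mapping.single 0 (Poly_Mapping.lookup ?p \<nu>) * phi \<sigma> \<nu>"
    unfolding subst_def k phi_def using assms by simp
  also have "\<dots> = phi \<sigma> \<mu> - phi \<sigma> \<nu>" unfolding l1 l2 by (simp add: single_uminus)
  finally show ?thesis .
qed

lemma S_ring_zero: "0 \<in> S_ring m" unfolding S_ring_def by simp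
lemma S_ring_one: "1 \<in> S_ring m" unfolding S_ring_iff Smono_def by simp
lemma S_ring_add:
  assumes "p \<in> S_ring m" "q \<in> S_ring m" shows "p + q \<in> S_ring m"
  unfolding S_ring_iff
proof
  fix \<alpha> assume "\<alpha> \<in> Poly_Mapping.keys (p + q)"
  then have "\<alpha> \<in> Poly_Mapping.keys p \<union> Poly_Mapping.keys q" by (rule subsetD[OF keys_add])
  moreover have "\<forall>\<alpha>\<in>Poly_Mapping.keys p. Smono m \<alpha>" "\<forall>\<alpha>\<in>Poly_Mapping.keys q. Smono m \<alpha>"
    using assms unfolding S_ring_iff by auto
  ultimately show "Smono m \<alpha>" by auto
qed
lemma S_ring_mult:
  assumes "p \<in> S_ring m" "q \<in> S_ring m" shows "p * q \<in> S_ring m"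
  unfolding S_ring_iff
proof
  fix \<alpha> assume "\<alpha> \<in> Poly_Mapping.keys (p * q)"
  then obtain x y where "\<alpha> = x + y" "x \<in> Poly_Mapping.keys p" "y \<in> Poly_Mapping.keys q"
    using keys_mult by blast
  then show "Smono m \<alpha>" using assms Smono_add unfolding S_ring_iff by blast
qed
lemma S_ring_monom: "Smono m t \<Longrightarrow> (monom t :: ('k::field) mpoly) \<in> S_ring m"
  unfolding S_ring_iff monom_def by simp

lemma ideal_S_base: "g \<in> G \<Longrightarrow> g \<in> ideal_S m G"
  unfolding ideal_S_def
  by (rule CollectI, rule exI[of _ "{g}"], rule exI[of _ "\<lambda>_. 1"]) (simp add: S_ring_one)

lemma ideal_S_zero: "0 \<in> ideal_S m G"
  unfolding ideal_S_def by (rule CollectI, rule exI[of _ "{}"]) simp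

lemma ideal_S_add:
  assumes "p \<in> ideal_S m G" "p' \<in> ideal_S m G"
  shows "p + p' \<in> ideal_S m G"
proof -
  obtain F q where F: "finite F" "F \<subseteq> G" "\<forall>g\<in>F. q g \<in> S_ring m" "p = (\<Sum>g\<in>F. q g * g)"
    using assms(1) unfolding ideal_S_def by blast
  obtain F' q' where F': "finite F'" "F' \<subseteq> G" "\<forall>g\<in>F'. q' g \<in> S_ring m" "p' = (\<Sum>g\<in>F'. q' g * g)"
    using assms(2) unfolding ideal_S_def by blast
  define r where "r g = (if g \<in> F then q g else 0) + (if g \<in> F' then q' g else 0)" for g
  have "p = (\<Sum>g\<in>F \<union> F'. (if g \<in> F then q g else 0) * g)"
    unfolding F(4) by (rule sum.mono_neutral_cong_left) (use F F' in auto)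
  moreover have "p' = (\<Sum>g\<in>F \<union> F'. (if g \<in> F' then q' g else 0) * g)"
    unfolding F'(4) by (rule sum.mono_neutral_cong_left) (use F F' in auto)
  ultimately have "p + p' = (\<Sum>g\<in>F \<union> F'. r g * g)"
    unfolding r_def by (simp add: sum.distrib distrib_right)
  moreover have "\<forall>g\<in>F \<union> F'. r g \<in> S_ring m"
    unfolding r_def using F(3) F'(3) by (auto intro!: S_ring_add simp: S_ring_zero)
  ultimately show ?thesis unfolding ideal_S_def
    by (intro CollectI exI[of _ "F \<union> F'"] exI[of _ r]) (use F F' in simp)
qed

lemma ideal_S_smult:
  assumes "r \<in> S_ring m" "p \<in> ideal_S m G"
  shows "r * p \<in> ideal_S m G"
proof -
  obtain F q where F: "finite F" "F \<subseteq> G" "\<forall>g\<in>F. q g \<in> S_ring m" "p = (\<Sum>g\<in>F. q g * g)"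
    using assms(2) unfolding ideal_S_def by blast
  have "r * p = (\<Sum>g\<in>F. (r * q g) * g)" unfolding F(4) by (simp add: sum_distrib_left mult.assoc)
  moreover have "\<forall>g\<in>F. r * q g \<in> S_ring m" using F(3) assms(1) S_ring_mult by blast
  ultimately show ?thesis unfolding ideal_S_def
    by (intro CollectI exI[of _ F] exI[of _ "\<lambda>g. r * q g"]) (use F in simp)
qed

lemma ideal_S_subset:
  assumes "G1 \<subseteq> ideal_S m G2"
  shows "ideal_S m G1 \<subseteq> ideal_S m G2"
proof
  fix p assume "p \<in> ideal_S m G1"
  then obtain F q where F: "finite F" "F \<subseteq> G1" "\<forall>g\<in>F. q g \<in> S_ring m" "p = (\<Sum>g\<in>F. q g * g)"
    unfolding ideal_S_def by blast
  have "(\<Sum>g\<in>F'. q g * g) \<in> ideal_S m G2" if "F' \<subseteq> F" for F'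
    using finite_subset[OF that F(1)] that
  proof (induction F' rule: finite_induct)
    case empty then show ?case by (simp add: ideal_S_zero)
  next
    case (insert x F')
    have xF: "x \<in> F" using insert.prems by simp
    have "q x \<in> S_ring m" using F(3) xF by blast
    moreover have "x \<in> ideal_S m G2" using F(2) assms xF by blast
    ultimately have "q x * x \<in> ideal_S m G2" by (rule ideal_S_smult)
    moreover have "(\<Sum>g\<in>F'. q g * g) \<in> ideal_S m G2" using insert by simp
    ultimately show ?case using insert(1,2) by (simp add: ideal_S_add)
  qed
  then show "p \<in> ideal_S m G2" unfolding F(4) by blast
qed

lemma ideal_S_mono: "G1 \<subseteq> G2 \<Longrightarrow> ideal_S m G1 \<subseteq> ideal_S m G2"
  unfolding ideal_S_def by blast

lemma ideal_S_in_S_ring: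
  assumes "G \<subseteq> S_ring m" shows "ideal_S m G \<subseteq> S_ring m"
proof
  fix p assume "p \<in> ideal_S m G"
  then obtain F q where F: "finite F" "F \<subseteq> G" "\<forall>g\<in>F. q g \<in> S_ring m" "p = (\<Sum>g\<in>F. q g * g)"
    unfolding ideal_S_def by blast
  have "(\<Sum>g\<in>F'. q g * g) \<in> S_ring m" if "F' \<subseteq> F" for F'
    using finite_subset[OF that F(1)] that
  proof (induction F' rule: finite_induct)
    case empty then show ?case by (simp add: S_ring_zero)
  next
    case (insert x F')
    have xF: "x \<in> F" using insert.prems by simp
    have "q x \<in> S_ring m" using F(3) xF by blast
    moreover have "x \<in> S_ring m" using F(2) assms xF by blast
    ultimately have "q x * x \<in> S_ring m" by (rule S_ring_mult)
    moreover have "(\<Sum>g\<in>F'. q g * g) \<in> S_ring m" using insert by simp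
    ultimately show ?case using insert(1,2) by (simp add: S_ring_add)
  qed
  then show "p \<in> S_ring m" unfolding F(4) by blast
qed

lemma monomial_ideal:
  assumes "(monom \<alpha> :: ('k::field) mpoly) \<in> ideal_S m G" "\<forall>g\<in>G. \<exists>\<mu>\<in>M. g = monom \<mu>"
  shows "\<exists>\<mu>\<in>M. \<exists>t. \<alpha> = t + \<mu>"
proof -
  obtain F q where F: "finite F" "F \<subseteq> G" "monom \<alpha> = (\<Sum>g\<in>F. q g * g)"
    using assms(1) unfolding ideal_S_def by blast
  have "(1::'k) = Poly_Mapping.lookup (monom \<alpha> :: 'k mpoly) \<alpha>" unfolding monom_def by simp
  also have "\<dots> = (\<Sum>g\<in>F. Poly_Mapping.lookup (q g * g) \<alpha>)" unfolding F(3) lookup_sum ..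
  finally have "(\<Sum>g\<in>F. Poly_Mapping.lookup (q g * g) \<alpha>) \<noteq> 0" by simp
  then have "\<exists>g\<in>F. Poly_Mapping.lookup (q g * g) \<alpha> \<noteq> 0"
  proof (rule contrapos_np)
    assume "\<not> (\<exists>g\<in>F. Poly_Mapping.lookup (q g * g) \<alpha> \<noteq> 0)"
    then have "\<forall>g\<in>F. Poly_Mapping.lookup (q g * g) \<alpha> = 0" by simp
    then show "(\<Sum>g\<in>F. Poly_Mapping.lookup (q g * g) \<alpha>) = 0" by (rule sum.neutral)
  qed
  then obtain g where g: "g \<in> F" "Poly_Mapping.lookup (q g * g) \<alpha> \<noteq> 0" by blast
  obtain \<mu> where \<mu>: "\<mu> \<in> M" "g = monom \<mu>" using assms(2) F(2) g(1) by blast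
  have "\<alpha> \<in> Poly_Mapping.keys (q g * g)" using g(2) by (simp add: in_keys_iff)
  then obtain x y where xy: "\<alpha> = x + y" "y \<in> Poly_Mapping.keys g" using keys_mult by blast
  moreover have "Poly_Mapping.keys g = {\<mu>}" unfolding \<mu>(2) monom_def by simp
  ultimately have "\<alpha> = x + \<mu>" by simp
  then show ?thesis using \<mu>(1) by blast
qed

definition Lam :: "(mono \<Rightarrow> 'k::field) \<Rightarrow> 'k mpoly \<Rightarrow> 'k" where
  "Lam \<chi> p = (\<Sum>\<beta>\<in>Poly_Mapping.keys p. Poly_Mapping.lookup p \<beta> * \<chi> \<beta>)"

lemma Lam_superset:
  assumes "finite A" "Poly_Mapping.keys p \<subseteq> A"
  shows "Lam \<chi> p = (\<Sum>\<beta>\<in>A. Poly_Mapping.lookup p \<beta> * \<chi> \<beta>)"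
  unfolding Lam_def by (rule sum.mono_neutral_left[OF assms]) (auto simp: in_keys_iff)

lemma Lam_add: "Lam \<chi> (p + q) = Lam \<chi> p + Lam \<chi> q"
proof -
  define A where "A = Poly_Mapping.keys p \<union> Poly_Mapping.keys q"
  have fA: "finite A" unfolding A_def by simp
  have "Lam \<chi> (p + q) = (\<Sum>\<beta>\<in>A. Poly_Mapping.lookup (p + q) \<beta> * \<chi> \<beta>)"
    by (rule Lam_superset[OF fA]) (use keys_add[of p q] in \<open>auto simp: A_def\<close>)
  also have "\<dots> = (\<Sum>\<beta>\<in>A. Poly_Mapping.lookup p \<beta> * \<chi> \<beta>) + (\<Sum>\<beta>\<in>A. Poly_Mapping.lookup q \<beta> * \<chi> \<beta>)"
    by (simp add: lookup_add distrib_right sum.distrib)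
  also have "\<dots> = Lam \<chi> p + Lam \<chi> q"
    using Lam_superset[OF fA, of p \<chi>] Lam_superset[OF fA, of q \<chi>] unfolding A_def by auto
  finally show ?thesis .
qed

lemma Lam_uminus: "Lam \<chi> (- p) = - Lam \<chi> p"
  unfolding Lam_def by (simp add: sum_negf)

lemma Lam_diff: "Lam \<chi> (p - q) = Lam \<chi> p - Lam \<chi> q"
  using Lam_add[of \<chi> p "- q"] Lam_uminus[of \<chi> q] by simp

lemma Lam_zero: "Lam \<chi> 0 = 0" unfolding Lam_def by simp

lemma Lam_single: "Lam \<chi> (Poly_Mapping.single \<beta> c) = c * \<chi> \<beta>"
  unfolding Lam_def by (cases "c = 0") auto

lemma Lam_sum: "Lam \<chi> (\<Sum>i\<in>I. f i) = (\<Sum>i\<in>I. Lam \<chi> (f i))"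
proof (cases "finite I")
  case True then show ?thesis
    by (induction I rule: finite_induct) (simp_all add: Lam_zero Lam_add)
next
  case False then show ?thesis by (simp add: Lam_zero)
qed

lemma poly_expand: "p = (\<Sum>t\<in>Poly_Mapping.keys p. Poly_Mapping.single t (Poly_Mapping.lookup p t))"
proof (rule poly_mapping_eqI)
  fix k
  have "(\<Sum>t\<in>Poly_Mapping.keys p. Poly_Mapping.lookup (Poly_Mapping.single t (Poly_Mapping.lookup p t)) k)
        = (\<Sum>t\<in>Poly_Mapping.keys p. if t = k then Poly_Mapping.lookup p k else 0)"
    by (rule sum.cong) (auto simp: lookup_single_if)
  also have "\<dots> = Poly_Mapping.lookup p k" by (simp add: sum.delta in_keys_iff)
  finally show "Poly_Mapping.lookup p k = Poly_Mapping.lookup (\<Sum>t\<in>Poly_Mapping.keys p. Poly_Mapping.single t (Poly_Mapping.lookup p t)) k"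
    by (simp add: lookup_sum)
qed

lemma Lam_binom:
  "Lam \<chi> (q * (monom \<mu> - monom \<nu>)) =
     (\<Sum>t\<in>Poly_Mapping.keys q. Poly_Mapping.lookup q t * (\<chi> (t + \<mu>) - \<chi> (t + \<nu>)))"
proof -
  have "q * (monom \<mu> - monom \<nu>) = (\<Sum>t\<in>Poly_Mapping.keys q. Poly_Mapping.single t (Poly_Mapping.lookup q t)) * (monom \<mu> - monom \<nu>)"
    using poly_expand[of q] by simp
  also have "\<dots> = (\<Sum>t\<in>Poly_Mapping.keys q. Poly_Mapping.single (t + \<mu>) (Poly_Mapping.lookup q t)
                   - Poly_Mapping.single (t + \<nu>) (Poly_Mapping.lookup q t))"
    unfolding sum_distrib_right monom_def by (simp add: right_diff_distrib mult_single)
  finally show ?thesis by (simp add: Lam_sum Lam_diff Lam_single right_diff_distrib)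
qed

lemma tau'_irrefl: "\<not> tau'_less m c c"
  unfolding tau'_less_def by auto

lemma tau'_asym:
  assumes "tau'_less m x y" shows "\<not> tau'_less m y x"
proof
  assume yx: "tau'_less m y x"
  have eq: "vabs m x = vabs m y" using assms yx unfolding tau'_less_def by linarith
  obtain i0 where i0: "i0 \<in> {1..m}" "x i0 > y i0" "\<forall>i\<in>{i0<..m}. x i = y i"
    using assms eq unfolding tau'_less_def by auto
  obtain i1 where i1: "i1 \<in> {1..m}" "y i1 > x i1" "\<forall>i\<in>{i1<..m}. y i = x i"
    using yx eq unfolding tau'_less_def by auto
  consider "i0 < i1" | "i1 < i0" | "i0 = i1" by linarith
  then show False
  proof cases
    case 1 then show False using i0(3) i1(1,2) by force
  next
    case 2 then show False using i1(3) i0(1,2) by force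
  next
    case 3 then show False using i0(2) i1(2) by simp
  qed
qed

context cpsetup
begin

lemma lead_reducible:
  fixes f :: "'k::field mpoly"
  assumes fI: "f \<in> ideal_S m ((\<lambda>(\<mu>,\<nu>). monom \<mu> - monom \<nu>) ` Gp m a b D)" and f0: "f \<noteq> 0"
  shows "\<exists>\<mu> \<nu> t. (\<mu>,\<nu>) \<in> Gp m a b D \<and> lead_mono m f = t + \<mu>"
proof (rule ccontr)
  assume nred: "\<not> (\<exists>\<mu> \<nu> t. (\<mu>,\<nu>) \<in> Gp m a b D \<and> lead_mono m f = t + \<mu>)"
  let ?G = "(\<lambda>(\<mu>,\<nu>). monom \<mu> - monom \<nu> :: 'k mpoly) ` Gp m a b D"
  have GS: "?G \<subseteq> S_ring m"
  proof
    fix g assume "g \<in> ?G"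
    then obtain \<mu> \<nu> where "(\<mu>,\<nu>) \<in> Gp m a b D" "g = monom \<mu> - monom \<nu>" by auto
    then show "g \<in> S_ring m" using Gp_props[OF _ Dpos] binom_S_ring by blast
  qed
  have fS: "f \<in> S_ring m" using ideal_S_in_S_ring[OF GS] fI by blast
  define \<alpha> where "\<alpha> = lead_mono m f"
  have \<alpha>: "\<alpha> \<in> Poly_Mapping.keys f" "\<forall>\<beta>\<in>Poly_Mapping.keys f. \<beta> \<noteq> \<alpha> \<longrightarrow> lex_less m \<beta> \<alpha>"
    using lead_mono_props[OF fS f0] unfolding \<alpha>_def by auto
  have irr: "\<forall>w. \<not> stD \<alpha> w"
  proof (intro allI notI)
    fix w assume "stD \<alpha> w"
    then obtain \<mu> \<nu> t where "(\<mu>,\<nu>) \<in> Gp m a b D" "\<alpha> = t + \<mu>" unfolding step_def by blast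
    then show False using nred unfolding \<alpha>_def by blast
  qed
  define \<chi> where "\<chi> \<beta> = (if stD\<^sup>*\<^sup>* \<beta> \<alpha> then 1 else (0::'k))" for \<beta>
  have inv: "\<chi> (t + \<mu>) = \<chi> (t + \<nu>)" if p: "(\<mu>,\<nu>) \<in> Gp m a b D" and t: "Smono m t" for \<mu> \<nu> t
  proof -
    have st: "stD (t + \<mu>) (t + \<nu>)" unfolding step_def using p t by blast
    have "stD\<^sup>*\<^sup>* (t + \<mu>) \<alpha> \<longleftrightarrow> stD\<^sup>*\<^sup>* (t + \<nu>) \<alpha>"
    proof
      assume h: "stD\<^sup>*\<^sup>* (t + \<mu>) \<alpha>"
      obtain z where z: "stD\<^sup>*\<^sup>* (t + \<nu>) z" "\<forall>w. \<not> stD z w"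
        using nf_exists[of stD "wt m" "t + \<nu>"] stD_dec by blast
      have "stD\<^sup>*\<^sup>* (t + \<mu>) z" using st z(1) by (meson converse_rtranclp_into_rtranclp)
      then have "z = \<alpha>" using unique_nf[OF _ h z(2) irr] by blast
      then show "stD\<^sup>*\<^sup>* (t + \<nu>) \<alpha>" using z(1) by simp
    next
      assume "stD\<^sup>*\<^sup>* (t + \<nu>) \<alpha>"
      then show "stD\<^sup>*\<^sup>* (t + \<mu>) \<alpha>" using st by (meson converse_rtranclp_into_rtranclp)
    qed
    then show ?thesis unfolding \<chi>_def by simp
  qed
  obtain F q where F: "finite F" "F \<subseteq> ?G" "\<forall>g\<in>F. q g \<in> S_ring m" "f = (\<Sum>g\<in>F. q g * g)"
    using fI unfolding ideal_S_def by blast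
  have L0: "Lam \<chi> (q g * g) = 0" if gF: "g \<in> F" for g
  proof -
    obtain \<mu> \<nu> where p: "(\<mu>,\<nu>) \<in> Gp m a b D" and g: "g = monom \<mu> - monom \<nu>" using F(2) gF by auto
    have qS: "q g \<in> S_ring m" using F(3) gF by blast
    have "Lam \<chi> (q g * g) = (\<Sum>t\<in>Poly_Mapping.keys (q g). Poly_Mapping.lookup (q g) t * (\<chi> (t + \<mu>) - \<chi> (t + \<nu>)))"
      unfolding g by (rule Lam_binom)
    also have "\<dots> = 0"
    proof (rule sum.neutral, rule ballI)
      fix t assume "t \<in> Poly_Mapping.keys (q g)"
      then have "Smono m t" using qS unfolding S_ring_iff by blast
      then show "Poly_Mapping.lookup (q g) t * (\<chi> (t + \<mu>) - \<chi> (t + \<nu>)) = 0" using inv[OF p] by simp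
    qed
    finally show ?thesis .
  qed
  have "Lam \<chi> f = 0" unfolding F(4) Lam_sum using L0 by simp
  moreover have "Lam \<chi> f = Poly_Mapping.lookup f \<alpha> * \<chi> \<alpha> + (\<Sum>\<beta>\<in>Poly_Mapping.keys f - {\<alpha>}. Poly_Mapping.lookup f \<beta> * \<chi> \<beta>)"
    unfolding Lam_def using \<alpha>(1) by (simp add: sum.remove)
  moreover have "\<chi> \<alpha> = 1" unfolding \<chi>_def by simp
  ultimately have "(\<Sum>\<beta>\<in>Poly_Mapping.keys f - {\<alpha>}. Poly_Mapping.lookup f \<beta> * \<chi> \<beta>) = - Poly_Mapping.lookup f \<alpha>"
    by (simp add: eq_neg_iff_add_eq_0 add.commute)
  moreover have "Poly_Mapping.lookup f \<alpha> \<noteq> 0" using \<alpha>(1) by (simp add: in_keys_iff)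
  ultimately have "(\<Sum>\<beta>\<in>Poly_Mapping.keys f - {\<alpha>}. Poly_Mapping.lookup f \<beta> * \<chi> \<beta>) \<noteq> 0" by simp
  then have "\<exists>\<beta>\<in>Poly_Mapping.keys f - {\<alpha>}. Poly_Mapping.lookup f \<beta> * \<chi> \<beta> \<noteq> 0"
  proof (rule contrapos_np)
    assume "\<not> (\<exists>\<beta>\<in>Poly_Mapping.keys f - {\<alpha>}. Poly_Mapping.lookup f \<beta> * \<chi> \<beta> \<noteq> 0)"
    then have "\<forall>\<beta>\<in>Poly_Mapping.keys f - {\<alpha>}. Poly_Mapping.lookup f \<beta> * \<chi> \<beta> = 0" by simp
    then show "(\<Sum>\<beta>\<in>Poly_Mapping.keys f - {\<alpha>}. Poly_Mapping.lookup f \<beta> * \<chi> \<beta>) = 0" by (rule sum.neutral)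
  qed
  then obtain \<beta> where \<beta>: "\<beta> \<in> Poly_Mapping.keys f - {\<alpha>}" "Poly_Mapping.lookup f \<beta> * \<chi> \<beta> \<noteq> 0"
    by blast
  then have rt: "stD\<^sup>*\<^sup>* \<beta> \<alpha>" unfolding \<chi>_def by (auto split: if_splits)
  have ne: "\<beta> \<noteq> \<alpha>" using \<beta>(1) by simp
  have "stD\<^sup>+\<^sup>+ \<beta> \<alpha>" using rtranclpD[OF rt] ne by blast
  then have "lex_less m \<alpha> \<beta>" by (rule steps_lex[OF _ Dpos])
  moreover have "lex_less m \<beta> \<alpha>" using \<alpha>(2) \<beta>(1) by blast
  ultimately show False using lex_less_asym by blast
qed

end

theorem proposition3p1:
  fixes m :: nat and a b :: "nat \<Rightarrow> nat" and C :: "(nat \<Rightarrow> nat) set"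
    and cs :: "(nat \<Rightarrow> nat) list"
  assumes m3: "m \<ge> 3"
    and ab: "\<forall>i\<in>{1..m}. b i < a i"
    and b2: "card {i\<in>{1..m}. b i \<noteq> 0} \<ge> 2"
    and Cfin: "finite C"
    and Csub: "\<forall>c\<in>C. in_Nm m c \<and> vabs m c \<ge> 2"
    and Cgb: "is_groebner_basis m (Gamma0 m a b \<union> {Pc m a b c | c. c \<in> C})
                (rees_L m a b :: ('k::field) mpoly set)"
    and Cclosed: "\<forall>c\<in>C. \<forall>c'. in_Nm m c' \<and> vabs m c' \<ge> 2 \<and> tau'_less m c' c \<longrightarrow> c' \<in> C"
    and cs_set: "set cs = C"
    and cs_sorted: "sorted_wrt (tau'_less m) cs"
  shows "\<forall>j\<le>length cs.
           is_groebner_basis m (Gamma0 m a b \<union> {Pc m a b (cs ! i) | i. i < j})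
             (ideal_S m (Gamma0 m a b \<union> {Pc m a b (cs ! i) | i. i < j}) :: 'k mpoly set)"
proof (intro allI impI)
  fix j assume j: "j \<le> length cs"
  define D where "D = {cs ! i | i. i < j}"
  define \<sigma> where "\<sigma> = (rees_sigma m a b :: var \<Rightarrow> 'k mpoly)"
  have Cpos: "\<forall>c\<in>C. vabs m c \<ge> 1" using Csub by fastforce
  have DC: "D \<subseteq> C" unfolding D_def using j cs_set by auto
  have Dclosed: "\<forall>c\<in>D. \<forall>c'\<in>C. tau'_less m c' c \<longrightarrow> c' \<in> D"
  proof (intro ballI impI)
    fix c c' assume cD: "c \<in> D" and c'C: "c' \<in> C" and tl: "tau'_less m c' c"
    obtain p where p: "p < j" "c = cs ! p" using cD unfolding D_def by blast
    obtain q where q: "q < length cs" "c' = cs ! q" using c'C cs_set by (auto simp: in_set_conv_nth)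
    show "c' \<in> D"
    proof (cases "q < j")
      case True then show ?thesis unfolding D_def using q by blast
    next
      case False
      then have "p < q" using p by simp
      then have "tau'_less m c c'" using sorted_wrt_nth_less[OF cs_sorted _ q(1)] p q by simp
      then show ?thesis using tau'_asym tl by blast
    qed
  qed
  have GN: "Gamma0 m a b \<union> {Pc m a b c | c. c \<in> C} = ((\<lambda>(\<mu>,\<nu>). monom \<mu> - monom \<nu>) ` Gp m a b C :: 'k mpoly set)"
    by (rule gens_eq)
  have NL: "Gamma0 m a b \<union> {Pc m a b c | c. c \<in> C} \<subseteq> (rees_L m a b :: 'k mpoly set)"
    and initeq: "init_ideal m (rees_L m a b :: 'k mpoly set) = init_ideal m (Gamma0 m a b \<union> {Pc m a b c | c. c \<in> C})"
    using Cgb unfolding is_groebner_basis_def by auto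
  have ph_pair: "phi \<sigma> \<mu> = phi \<sigma> \<nu>" if p: "(\<mu>,\<nu>) \<in> Gp m a b C" for \<mu> \<nu>
  proof -
    have "(monom \<mu> - monom \<nu> :: 'k mpoly) \<in> rees_L m a b" using NL p unfolding GN by blast
    then have "subst \<sigma> (monom \<mu> - monom \<nu> :: 'k mpoly) = 0" unfolding rees_L_def \<sigma>_def by blast
    moreover have "\<mu> \<noteq> \<nu>" using Gp_props[OF p Cpos] lex_less_irrefl by metis
    ultimately show ?thesis using subst_binom by (metis eq_iff_diff_eq_0)
  qed
  have red: "\<exists>w. step m a b C y w"
    if lz: "lex_less m z y" and Sy: "Smono m y" and Sz: "Smono m z" and pe: "phi \<sigma> y = phi \<sigma> z" for y z
  proof -
    have ne: "y \<noteq> z" using lz lex_less_irrefl by metis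
    let ?p = "monom y - monom z :: 'k mpoly"
    have pS: "?p \<in> S_ring m" by (rule binom_S_ring[OF Sy Sz])
    have "subst \<sigma> ?p = 0" using subst_binom[OF ne, of \<sigma>] pe by simp
    then have pL: "?p \<in> rees_L m a b" unfolding rees_L_def \<sigma>_def using pS by blast
    have p0: "?p \<noteq> 0" by (rule binom_nonzero[OF ne])
    have lp: "lead_mono m ?p = y" by (rule lead_binom[OF Sy Sz lz])
    have "monom y \<in> {monom (lead_mono m f) | f. f \<in> (rees_L m a b :: 'k mpoly set) \<and> f \<noteq> 0}"
      using pL p0 lp by force
    then have "(monom y :: 'k mpoly) \<in> init_ideal m (rees_L m a b)"
      unfolding init_ideal_def by (rule ideal_S_base)
    then have yI: "(monom y :: 'k mpoly) \<in> ideal_S m {monom (lead_mono m f) | f. f \<in> ((\<lambda>(\<mu>,\<nu>). monom \<mu> - monom \<nu>) ` Gp m a b C) \<and> f \<noteq> (0::'k mpoly)}"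
      using \<open>(monom y :: 'k mpoly) \<in> init_ideal m (rees_L m a b)\<close> unfolding initeq GN by (simp add: init_ideal_def)
    have gens: "\<forall>g\<in>{monom (lead_mono m f) | f. f \<in> ((\<lambda>(\<mu>,\<nu>). monom \<mu> - monom \<nu>) ` Gp m a b C) \<and> f \<noteq> (0::'k mpoly)}.
                  \<exists>\<mu>\<in>{\<mu>. \<exists>\<nu>. (\<mu>,\<nu>) \<in> Gp m a b C}. g = monom \<mu>"
    proof
      fix g assume "g \<in> {monom (lead_mono m f) | f. f \<in> ((\<lambda>(\<mu>,\<nu>). monom \<mu> - monom \<nu>) ` Gp m a b C) \<and> f \<noteq> (0::'k mpoly)}"
      then obtain \<mu> \<nu> where p: "(\<mu>,\<nu>) \<in> Gp m a b C" and g: "g = monom (lead_mono m (monom \<mu> - monom \<nu> :: 'k mpoly))"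
        by auto
      have "lead_mono m (monom \<mu> - monom \<nu> :: 'k mpoly) = \<mu>"
        using Gp_props[OF p Cpos] lead_binom by blast
      then show "\<exists>\<mu>\<in>{\<mu>. \<exists>\<nu>. (\<mu>,\<nu>) \<in> Gp m a b C}. g = monom \<mu>" using g p by auto
    qed
    obtain \<mu> t where \<mu>: "\<mu> \<in> {\<mu>. \<exists>\<nu>. (\<mu>,\<nu>) \<in> Gp m a b C}" and yt: "y = t + \<mu>"
      using monomial_ideal[OF yI gens] by blast
    obtain \<nu> where p: "(\<mu>,\<nu>) \<in> Gp m a b C" using \<mu> by blast
    have "Smono m t" using Sy yt Smono_le by blast
    then have "step m a b C y (t + \<nu>)" unfolding step_def using p yt by blast
    then show ?thesis by blast
  qed
  have G2: "y = z" if h: "Smono m y" "Smono m z" "phi \<sigma> y = phi \<sigma> z"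
    "\<forall>w. \<not> step m a b C y w" "\<forall>w. \<not> step m a b C z w" for y z
  proof (rule ccontr)
    assume "y \<noteq> z"
    then consider "lex_less m y z" | "lex_less m z y" using lex_total h(1,2) by blast
    then show False
    proof cases
      case 1 then show False using red[OF 1 h(2) h(1) h(3)[symmetric]] h(5) by blast
    next
      case 2 then show False using red[OF 2 h(1) h(2) h(3)] h(4) by blast
    qed
  qed
  interpret cp: cpsetup m a b C D "phi \<sigma>"
  proof
    show "\<forall>i\<in>{1..m}. b i < a i" by (rule ab)
    show "\<forall>c\<in>C. in_Nm m c \<and> 2 \<le> vabs m c" by (rule Csub)
    show "\<forall>c\<in>C. \<forall>c'. in_Nm m c' \<and> 2 \<le> vabs m c' \<and> tau'_less m c' c \<longrightarrow> c' \<in> C" by (rule Cclosed)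
    show "D \<subseteq> C" by (rule DC)
    show "\<forall>c\<in>D. \<forall>c'\<in>C. tau'_less m c' c \<longrightarrow> c' \<in> D" by (rule Dclosed)
    show "phi \<sigma> (x + y) = phi \<sigma> x * phi \<sigma> y" for x y by (rule phi_add)
    show "phi \<sigma> \<mu> = phi \<sigma> \<nu>" if "(\<mu>, \<nu>) \<in> Gp m a b C" for \<mu> \<nu> using ph_pair[OF that] .
    show "y = z" if "Smono m y" "Smono m z" "phi \<sigma> y = phi \<sigma> z"
      "\<forall>w. \<not> step m a b C y w" "\<forall>w. \<not> step m a b C z w" for y z using G2[OF that] .
  qed
  define G where "G = (Gamma0 m a b \<union> {Pc m a b (cs ! i) | i. i < j} :: 'k mpoly set)"
  have PD: "{Pc m a b (cs ! i) | i. i < j} = {Pc m a b c | c. c \<in> D}" unfolding D_def by auto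
  have Geq: "G = (\<lambda>(\<mu>,\<nu>). monom \<mu> - monom \<nu>) ` Gp m a b D" unfolding G_def PD by (rule gens_eq)
  have GS: "G \<subseteq> S_ring m"
  proof
    fix g assume "g \<in> G"
    then obtain \<mu> \<nu> where "(\<mu>,\<nu>) \<in> Gp m a b D" "g = monom \<mu> - monom \<nu>" unfolding Geq by auto
    then have "(\<mu>,\<nu>) \<in> Gp m a b D" "g = monom \<mu> - monom \<nu>" by auto
    moreover from Gp_props[OF this(1) cp.Dpos] have "Smono m \<mu>" "Smono m \<nu>" by auto
    ultimately show "g \<in> S_ring m" using binom_S_ring by simp
  qed
  have sub: "G \<subseteq> ideal_S m G" using ideal_S_base by blast
  have "init_ideal m (ideal_S m G) = init_ideal m G"
    unfolding init_ideal_def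
  proof (rule equalityI)
    show "ideal_S m {monom (lead_mono m f) |f. f \<in> G \<and> f \<noteq> 0}
          \<subseteq> ideal_S m {monom (lead_mono m f) |f. f \<in> ideal_S m G \<and> f \<noteq> 0}"
      by (rule ideal_S_mono) (use sub in blast)
    show "ideal_S m {monom (lead_mono m f) |f. f \<in> ideal_S m G \<and> f \<noteq> 0}
          \<subseteq> ideal_S m {monom (lead_mono m f) |f. f \<in> G \<and> f \<noteq> 0}"
    proof (rule ideal_S_subset, rule subsetI)
      fix x assume "x \<in> {monom (lead_mono m f) |f. f \<in> ideal_S m G \<and> f \<noteq> 0}"
      then obtain f where f: "f \<in> ideal_S m G" "f \<noteq> 0" "x = monom (lead_mono m f)" by blast
      obtain \<mu> \<nu> t where p: "(\<mu>,\<nu>) \<in> Gp m a b D" and lt: "lead_mono m f = t + \<mu>"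
        using cp.lead_reducible[of f] f(1,2) unfolding Geq by blast
      have fS: "f \<in> S_ring m" using ideal_S_in_S_ring[OF GS] f(1) by blast
      have "lead_mono m f \<in> Poly_Mapping.keys f" using lead_mono_props[OF fS f(2)] by blast
      then have "Smono m (t + \<mu>)" using fS lt unfolding S_ring_iff by auto
      then have St: "Smono m t" by (rule Smono_le)
      have pp: "Smono m \<mu>" "Smono m \<nu>" "lex_less m \<nu> \<mu>" using Gp_props[OF p cp.Dpos] by auto
      have ne: "\<mu> \<noteq> \<nu>" using pp(3) lex_less_irrefl by metis
      have gG: "monom \<mu> - monom \<nu> \<in> G" unfolding Geq using p by force
      have "monom \<mu> \<in> {monom (lead_mono m f) |f. f \<in> G \<and> f \<noteq> 0}"
      proof -
        have "lead_mono m (monom \<mu> - monom \<nu> :: 'k mpoly) = \<mu>" by (rule lead_binom[OF pp])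
        moreover have "(monom \<mu> - monom \<nu> :: 'k mpoly) \<noteq> 0" by (rule binom_nonzero[OF ne])
        ultimately show ?thesis using gG by (metis (mono_tags, lifting) mem_Collect_eq)
      qed
      then have "monom \<mu> \<in> ideal_S m {monom (lead_mono m f) |f. f \<in> G \<and> f \<noteq> 0}" by (rule ideal_S_base)
      then have "monom t * monom \<mu> \<in> ideal_S m {monom (lead_mono m f) |f. f \<in> G \<and> f \<noteq> 0}"
        by (rule ideal_S_smult[OF S_ring_monom[OF St]])
      moreover have "x = monom t * monom \<mu>" unfolding f(3) lt monom_def by (simp add: mult_single)
      ultimately show "x \<in> ideal_S m {monom (lead_mono m f) |f. f \<in> G \<and> f \<noteq> 0}" by simp
    qed
  qed
  then show "is_groebner_basis m (Gamma0 m a b \<union> {Pc m a b (cs ! i) | i. i < j})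
             (ideal_S m (Gamma0 m a b \<union> {Pc m a b (cs ! i) | i. i < j}) :: 'k mpoly set)"
    unfolding is_groebner_basis_def G_def[symmetric] using sub by blast
qed

end
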